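(* Fix $2\le d\le7$. Let $w$ be a good sequence of weights normalized to be a probability distribution. There exists $c\in(0,1)$ such that $\psi^{(k)}(\mathsf R(w))$ belongs to $\mathcal{S}_{0,1,c}$ for all $k$ large enough, and $\psi^{(k)}(\mathsf R(w))$ converges pointwise as $k\to\infty$.
   Context: A sequence $w=(w(i))_{i\in\mathbb{Z}}\in[0,\infty)^{\mathbb{Z}}$ is good if $w(i)=w(-i)$ for all $i$, $w(0)>0$, and there exist an integer $k\ge0$ and $c\in[0,1)$ with $w(i)=w(i+1)$ for $0\le i<k$ and $w(i+1)\le c\,w(i)$ for $i\ge k$. For a probability distribution $z$ on $\mathbb{Z}$ set $A(z)_i=(z_{i-1}+z_i+z_{i+1})^d$, $F(z)=A(z)/\sum_iA(z)_i$. $\mathcal{E}$ is the set of symmetric probability distributions on $\mathbb{Z}$ whose support is an interval or all of $\mathbb{Z}$ (a normalized good $w$ lies in $\mathcal{E}$). $\mathsf R\colon\mathcal{E}\to[0,\infty)^{\{1,2,\dots\}}$, $\mathsf R(z)_i=z_i/z_{i-1}$ if $z_{i-1}\ne0$ and $0$ otherwise; $\mathsf R$ is injective on $\mathcal{E}$, $\mathcal{R}:=\mathsf R(\mathcal{E})$, $\psi:=\mathsf R\circ F\circ\mathsf R^{-1}\colon\mathcal{R}\to\mathcal{R}$, i.e. $\psi(x)_1=\big(\frac{1+x_1+x_1x_2}{1+2x_1}\big)^d$ and $\psi(x)_n=x_{n-1}^d\big(\frac{1+x_n+x_nx_{n+1}}{1+x_{n-1}+x_{n-1}x_n}\big)^d$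 for $n\ge2$. $\psi^{(k)}$ is the $k$-fold iterate. For reals $a,b,c$, $\mathcal{S}_{a,b,c}:=\{x\in\mathcal{R}: a\le x_1\le b,\ 0\le x_n\le c\ \forall n\ge2\}$. *)

theory Defs
  imports "HOL-Analysis.Analysis"
begin

definition good :: "(int \<Rightarrow> real) \<Rightarrow> bool" where
  "good w \<longleftrightarrow> (\<forall>i. w i \<ge> 0) \<and> (\<forall>i. w i = w (-i)) \<and> w 0 > 0 \<and>
     (\<exists>k::int. \<exists>c::real. k \<ge> 0 \<and> 0 \<le> c \<and> c < 1 \<and>
        (\<forall>i. 0 \<le> i \<and> i < k \<longrightarrow> w i = w (i + 1)) \<and>
        (\<forall>i. i \<ge> k \<longrightarrow> w (i + 1) \<le> c * w i))"

definition prob_dist :: "(int \<Rightarrow> real) \<Rightarrow> bool" where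
  "prob_dist z \<longleftrightarrow> (\<forall>i. z i \<ge> 0) \<and> (z has_sum 1) UNIV"

definition Eset :: "(int \<Rightarrow> real) set" where
  "Eset = {z. prob_dist z \<and> (\<forall>i. z i = z (-i)) \<and>
              (\<forall>a b c. a \<le> c \<and> c \<le> b \<and> z a \<noteq> 0 \<and> z b \<noteq> 0 \<longrightarrow> z c \<noteq> 0)}"

text \<open>The ratio map R; sequences indexed by positive naturals, index 0 is a dummy set to 0.\<close>
definition Rmap :: "(int \<Rightarrow> real) \<Rightarrow> (nat \<Rightarrow> real)" where
  "Rmap z n = (if n = 0 then 0
               else if z (int n - 1) \<noteq> 0 then z (int n) / z (int n - 1) else 0)"

definition Rset :: "(nat \<Rightarrow> real) set" where
  "Rset = Rmap ` Eset"

definition psi :: "nat \<Rightarrow> (nat \<Rightarrow> real) \<Rightarrow> (nat \<Rightarrow> real)" where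
  "psi d x n = (if n = 0 then 0
     else if n = 1 then ((1 + x 1 + x 1 * x 2) / (1 + 2 * x 1)) ^ d
     else x (n - 1) ^ d *
          ((1 + x n + x n * x (n + 1)) / (1 + x (n - 1) + x (n - 1) * x n)) ^ d)"

definition Sset :: "real \<Rightarrow> real \<Rightarrow> real \<Rightarrow> (nat \<Rightarrow> real) set" where
  "Sset a b c = {x \<in> Rset. a \<le> x 1 \<and> x 1 \<le> b \<and> (\<forall>n\<ge>2. 0 \<le> x n \<and> x n \<le> c)}"

end

theory Submission
  imports Defs
begin


definition gq :: "real \<Rightarrow> real \<Rightarrow> real" where "gq a b = (1 + a + a*b) / (1 + 2*a)"
definition hp :: "real \<Rightarrow> real \<Rightarrow> real \<Rightarrow> real" where "hp a b c = a * (1 + b + b*c) / (1 + a + a*b)"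

lemma psi_1: "psi d x 1 = gq (x 1) (x 2) ^ d"
  by (simp add: psi_def gq_def)

lemma psi_n: "n \<ge> 2 \<Longrightarrow> psi d x n = hp (x (n-1)) (x n) (x (n+1)) ^ d"
  by (simp add: psi_def hp_def power_mult_distrib[symmetric] power_divide)

lemma psi_0: "psi d x 0 = 0" by (simp add: psi_def)

lemma gq_nonneg: "0 \<le> a \<Longrightarrow> 0 \<le> b \<Longrightarrow> 0 \<le> gq a b"
  by (simp add: gq_def)

lemma gq_le1: "0 \<le> a \<Longrightarrow> b \<le> 1 \<Longrightarrow> gq a b \<le> 1"
proof -
  assume a: "0 \<le> a" "b \<le> 1"
  have "a*b \<le> a" using a by (simp add: mult_left_le)
  thus ?thesis using a by (simp add: gq_def divide_simps)
qed

lemma gq_diff_a: "0 \<le> a \<Longrightarrow> 0 \<le> a' \<Longrightarrow> gq a b - gq a' b = (a' - a) * (1 - b) / ((1+2*a)*(1+2*a'))"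
proof -
  assume "0 \<le> a" "0 \<le> a'"
  hence "1+2*a \<noteq> 0" "1+2*a' \<noteq> 0" by linarith+
  thus ?thesis by (simp add: gq_def divide_simps) (simp add: algebra_simps)
qed

lemma gq_diff_b: "0 \<le> a \<Longrightarrow> gq a b' - gq a b = a * (b' - b) / (1+2*a)"
proof -
  assume "0 \<le> a"
  hence "1+2*a \<noteq> 0" by linarith
  thus ?thesis by (simp add: gq_def divide_simps) (simp add: algebra_simps)
qed

lemma gq_anti: "0 \<le> a \<Longrightarrow> a \<le> a' \<Longrightarrow> b \<le> 1 \<Longrightarrow> gq a' b \<le> gq a b"
proof -
  assume h: "0 \<le> a" "a \<le> a'" "b \<le> 1"
  have "0 \<le> (a' - a) * (1 - b) / ((1+2*a)*(1+2*a'))" using h by simp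
  thus ?thesis using gq_diff_a[of a a' b] h by linarith
qed

lemma gq_mono: "0 \<le> a \<Longrightarrow> b \<le> b' \<Longrightarrow> gq a b \<le> gq a b'"
proof -
  assume h: "0 \<le> a" "b \<le> b'"
  have "0 \<le> a * (b' - b) / (1+2*a)" using h by simp
  thus ?thesis using gq_diff_b[of a b' b] h by linarith
qed

lemma hp_nonneg: "0 \<le> a \<Longrightarrow> 0 \<le> b \<Longrightarrow> 0 \<le> c \<Longrightarrow> 0 \<le> hp a b c"
  by (simp add: hp_def)

lemma hp_diff_a: "0 \<le> a \<Longrightarrow> 0 \<le> a' \<Longrightarrow> 0 \<le> b \<Longrightarrow>
  hp a' b c - hp a b c = (1+b+b*c) * (a' - a) / ((1+a'*(1+b))*(1+a*(1+b)))"
proof -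
  assume h: "0 \<le> a" "0 \<le> a'" "0 \<le> b"
  have p1: "1+a'*(1+b) > 0" and p2: "1+a*(1+b) > 0" using h by (intro add_pos_nonneg; simp)+
  have e1: "1 + a + a*b = 1+a*(1+b)" "1 + a' + a'*b = 1+a'*(1+b)" by (simp_all add: algebra_simps)
  show ?thesis unfolding hp_def e1 using p1 p2
    by (simp add: divide_simps del: distrib_left_numeral) (simp add: algebra_simps)
qed

lemma hp_diff_b: "0 \<le> a \<Longrightarrow> 0 \<le> b \<Longrightarrow> 0 \<le> b' \<Longrightarrow>
  hp a b' c - hp a b c = a * (1+c+a*c) * (b' - b) / ((1+a*(1+b))*(1+a*(1+b')))"
proof -
  assume h: "0 \<le> a" "0 \<le> b" "0 \<le> b'"
  have p1: "1+a*(1+b) > 0" and p2: "1+a*(1+b') > 0" using h by (intro add_pos_nonneg; simp)+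
  have e1: "1 + a + a*b = 1+a*(1+b)" "1 + a + a*b' = 1+a*(1+b')" by (simp_all add: algebra_simps)
  show ?thesis unfolding hp_def e1 using p1 p2
    by (simp add: divide_simps del: distrib_left_numeral) (simp add: algebra_simps)
qed

lemma hp_diff_c: "0 \<le> a \<Longrightarrow> 0 \<le> b \<Longrightarrow>
  hp a b c' - hp a b c = a * b * (c' - c) / (1+a*(1+b))"
proof -
  assume h: "0 \<le> a" "0 \<le> b"
  have p1: "1+a*(1+b) > 0" using h by (intro add_pos_nonneg; simp)+
  have e1: "1 + a + a*b = 1+a*(1+b)" by (simp_all add: algebra_simps)
  show ?thesis unfolding hp_def e1 using p1
    by (simp add: divide_simps del: distrib_left_numeral) (simp add: algebra_simps)
qed

lemma hp_mono: "0 \<le> a \<Longrightarrow> a \<le> a' \<Longrightarrow> 0 \<le> b \<Longrightarrow> b \<le> b' \<Longrightarrow> 0 \<le> c \<Longrightarrow> c \<le> c'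
  \<Longrightarrow> hp a b c \<le> hp a' b' c'"
proof -
  assume h: "0 \<le> a" "a \<le> a'" "0 \<le> b" "b \<le> b'" "0 \<le> c" "c \<le> c'"
  have 1: "hp a b c \<le> hp a' b c"
  proof -
    have "0 \<le> (1+b+b*c) * (a' - a) / ((1+a'*(1+b))*(1+a*(1+b)))" using h by simp
    thus ?thesis using hp_diff_a[of a a' b c] h by linarith
  qed
  have 2: "hp a' b c \<le> hp a' b' c"
  proof -
    have "0 \<le> a' * (1+c+a'*c) * (b' - b) / ((1+a'*(1+b))*(1+a'*(1+b')))" using h by simp
    thus ?thesis using hp_diff_b[of a' b b' c] h by linarith
  qed
  have 3: "hp a' b' c \<le> hp a' b' c'"
  proof -
    have "0 \<le> a' * b' * (c' - c) / (1+a'*(1+b'))" using h by simp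
    thus ?thesis using hp_diff_c[of a' b' c' c] h by linarith
  qed
  show ?thesis using 1 2 3 by linarith
qed



lemma pow_lip: "0 \<le> p \<Longrightarrow> 0 \<le> q \<Longrightarrow> p \<le> M \<Longrightarrow> q \<le> M \<Longrightarrow>
   \<bar>p ^ Suc n - q ^ Suc n\<bar> \<le> real (Suc n) * M ^ n * \<bar>p - q\<bar>"
proof (induction n)
  case 0 thus ?case by simp
next
  case (Suc n)
  have M0: "0 \<le> M" using Suc.prems by linarith
  have "p ^ Suc (Suc n) - q ^ Suc (Suc n) = p * (p ^ Suc n - q ^ Suc n) + q ^ Suc n * (p - q)"
    by (simp add: algebra_simps)
  hence "\<bar>p ^ Suc (Suc n) - q ^ Suc (Suc n)\<bar> \<le> \<bar>p\<bar> * \<bar>p ^ Suc n - q ^ Suc n\<bar> + \<bar>q ^ Suc n\<bar> * \<bar>p - q\<bar>"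
    by (metis abs_mult abs_triangle_ineq)
  also have "\<dots> \<le> M * (real (Suc n) * M ^ n * \<bar>p - q\<bar>) + M ^ Suc n * \<bar>p - q\<bar>"
  proof (rule add_mono)
    show "\<bar>p\<bar> * \<bar>p ^ Suc n - q ^ Suc n\<bar> \<le> M * (real (Suc n) * M ^ n * \<bar>p - q\<bar>)"
      using Suc by (intro mult_mono) auto
    show "\<bar>q ^ Suc n\<bar> * \<bar>p - q\<bar> \<le> M ^ Suc n * \<bar>p - q\<bar>"
      using Suc.prems by (intro mult_right_mono) (auto intro!: power_mono simp del: power_Suc)
  qed
  also have "\<dots> = real (Suc (Suc n)) * M ^ Suc n * \<bar>p - q\<bar>" by (simp add: algebra_simps)
  finally show ?case .
qed

lemma gq_lip:
  assumes "0 \<le> l1" "l1 \<le> a" "a \<le> u1" "l1 \<le> a'" "a' \<le> u1"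
    "0 \<le> l2" "l2 \<le> b" "b \<le> u2" "l2 \<le> b'" "b' \<le> u2" "u2 \<le> 1"
  shows "\<bar>gq a b - gq a' b'\<bar> \<le> (1 - l2) / (1+2*l1)^2 * \<bar>a - a'\<bar> + u1 / (1+2*l1) * \<bar>b - b'\<bar>"
proof -
  have "\<bar>gq a b - gq a' b\<bar> = \<bar>a' - a\<bar> * (1 - b) / ((1+2*a)*(1+2*a'))"
    using gq_diff_a[of a a' b] assms by (simp add: abs_mult abs_divide)
  also have "\<dots> \<le> \<bar>a - a'\<bar> * (1 - l2) / ((1+2*l1)^2)"
    using assms by (intro frac_le mult_left_mono) (auto simp: power2_eq_square intro!: mult_mono)
  finally have 1: "\<bar>gq a b - gq a' b\<bar> \<le> (1 - l2) / (1+2*l1)^2 * \<bar>a - a'\<bar>" by (simp add: mult.commute)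
  have "\<bar>gq a' b - gq a' b'\<bar> = a' * \<bar>b - b'\<bar> / (1+2*a')"
    using gq_diff_b[of a' b b'] assms by (simp add: abs_mult abs_divide)
  also have "\<dots> \<le> u1 * \<bar>b - b'\<bar> / (1+2*l1)"
    using assms by (intro frac_le mult_right_mono) auto
  finally have 2: "\<bar>gq a' b - gq a' b'\<bar> \<le> u1 / (1+2*l1) * \<bar>b - b'\<bar>" by simp
  show ?thesis using 1 2 abs_triangle_ineq[of "gq a b - gq a' b" "gq a' b - gq a' b'"] by simp
qed

lemma hp_lip:
  assumes "0 \<le> la" "la \<le> a" "a \<le> ua" "la \<le> a'" "a' \<le> ua"
    "0 \<le> lb" "lb \<le> b" "b \<le> ub" "lb \<le> b'" "b' \<le> ub"
    "0 \<le> lc" "lc \<le> c" "c \<le> uc" "lc \<le> c'" "c' \<le> uc"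
  shows "\<bar>hp a b c - hp a' b' c'\<bar> \<le> (1+ub+ub*uc) / (1+la*(1+lb))^2 * \<bar>a - a'\<bar>
     + ua*(1+uc+ua*uc) / (1+la*(1+lb))^2 * \<bar>b - b'\<bar> + ua*ub / (1+la*(1+lb)) * \<bar>c - c'\<bar>"
proof -
  have d0: "0 < 1+la*(1+lb)" using assms by (intro add_pos_nonneg; simp)
  have "\<bar>hp a b c - hp a' b c\<bar> = (1+b+b*c) * \<bar>a - a'\<bar> / ((1+a*(1+b))*(1+a'*(1+b)))"
    using hp_diff_a[of a' a b c] assms by (simp add: abs_mult abs_divide)
  also have "\<dots> \<le> (1+ub+ub*uc) * \<bar>a - a'\<bar> / ((1+la*(1+lb))^2)"
  proof (intro frac_le mult_right_mono)
    show "1 + b + b * c \<le> 1 + ub + ub * uc" using assms by (intro add_mono mult_mono) auto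
    show "(1 + la * (1 + lb))\<^sup>2 \<le> (1 + a * (1 + b)) * (1 + a' * (1 + b))"
      unfolding power2_eq_square using assms by (intro mult_mono add_mono) auto
  qed (use assms d0 in auto)
  finally have 1: "\<bar>hp a b c - hp a' b c\<bar> \<le> (1+ub+ub*uc) / (1+la*(1+lb))^2 * \<bar>a - a'\<bar>" by simp
  have "\<bar>hp a' b c - hp a' b' c\<bar> = a' * (1+c+a'*c) * \<bar>b - b'\<bar> / ((1+a'*(1+b'))*(1+a'*(1+b)))"
    using hp_diff_b[of a' b' b c] assms by (simp add: abs_mult abs_divide)
  also have "\<dots> \<le> ua * (1+uc+ua*uc) * \<bar>b - b'\<bar> / ((1+la*(1+lb))^2)"
  proof (intro frac_le mult_right_mono)
    show "a' * (1 + c + a' * c) \<le> ua * (1 + uc + ua * uc)" using assms by (intro add_mono mult_mono) auto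
    show "(1 + la * (1 + lb))\<^sup>2 \<le> (1 + a' * (1 + b')) * (1 + a' * (1 + b))"
      unfolding power2_eq_square using assms by (intro mult_mono add_mono) auto
  qed (use assms d0 in auto)
  finally have 2: "\<bar>hp a' b c - hp a' b' c\<bar> \<le> ua*(1+uc+ua*uc) / (1+la*(1+lb))^2 * \<bar>b - b'\<bar>" by simp
  have "\<bar>hp a' b' c - hp a' b' c'\<bar> = a' * b' * \<bar>c - c'\<bar> / (1+a'*(1+b'))"
    using hp_diff_c[of a' b' c c'] assms by (simp add: abs_mult abs_divide)
  also have "\<dots> \<le> ua * ub * \<bar>c - c'\<bar> / (1+la*(1+lb))"
  proof (intro frac_le mult_right_mono)
    show "a' * b' \<le> ua * ub" using assms by (intro mult_mono) auto
    show "1 + la * (1 + lb) \<le> 1 + a' * (1 + b')" using assms by (intro add_mono mult_mono) auto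
  qed (use assms d0 in auto)
  finally have 3: "\<bar>hp a' b' c - hp a' b' c'\<bar> \<le> ua*ub / (1+la*(1+lb)) * \<bar>c - c'\<bar>" by simp
  show ?thesis using 1 2 3
    abs_triangle_ineq[of "hp a b c - hp a' b c" "hp a' b c - hp a' b' c"]
    abs_triangle_ineq[of "hp a b c - hp a' b' c" "hp a' b' c - hp a' b' c'"] by simp
qed



type_synonym box = "real \<times> real \<times> real \<times> real \<times> real"

definition cbx :: "box \<Rightarrow> (nat \<Rightarrow> real) \<Rightarrow> bool" where
  "cbx B x \<longleftrightarrow> (case B of (l1,u1,l2,u2,e) \<Rightarrow>
     l1 \<le> x 1 \<and> x 1 \<le> u1 \<and> l2 \<le> x 2 \<and> x 2 \<le> u2 \<and> (\<forall>n\<ge>3. 0 \<le> x n \<and> x n \<le> e))"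

definition cstep :: "nat \<Rightarrow> box \<Rightarrow> box \<Rightarrow> bool" where
  "cstep d B B' \<longleftrightarrow> (case B of (l1,u1,l2,u2,e) \<Rightarrow> case B' of (l1',u1',l2',u2',e') \<Rightarrow>
     0 \<le> l1 \<and> u1 \<le> 1 \<and> 0 \<le> l2 \<and> u2 \<le> 1 \<and> 0 \<le> e \<and> e \<le> 1 \<and>
     l1' \<le> gq u1 l2 ^ d \<and> gq l1 u2 ^ d \<le> u1' \<and> l2' \<le> hp l1 l2 0 ^ d \<and>
     hp u1 u2 e ^ d \<le> u2' \<and> hp u2 e e ^ d \<le> e' \<and> hp e e e ^ d \<le> e')"

lemma cstep_cbx:
  assumes st: "cstep d B B'" and bx: "cbx B x"
  shows "cbx B' (psi d x)"
proof -
  obtain l1 u1 l2 u2 e where B: "B = (l1,u1,l2,u2,e)" using prod_cases5 by blast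
  obtain l1' u1' l2' u2' e' where B': "B' = (l1',u1',l2',u2',e')" using prod_cases5 by blast
  note st = st[unfolded cstep_def B B' prod.case]
  note bx = bx[unfolded cbx_def B prod.case]
  have x1: "0 \<le> x 1" "x 1 \<le> 1" using st bx by auto
  have x2: "0 \<le> x 2" "x 2 \<le> 1" using st bx by auto
  have x3: "0 \<le> x 3" "x 3 \<le> e" using bx by auto
  have "l1' \<le> gq u1 l2 ^ d" using st by simp
  also have "\<dots> \<le> gq (x 1) (x 2) ^ d"
  proof (rule power_mono)
    have "gq u1 l2 \<le> gq (x 1) l2" using gq_anti[of "x 1" u1 l2] bx st x1 by linarith
    also have "\<dots> \<le> gq (x 1) (x 2)" using gq_mono[of "x 1" l2 "x 2"] bx x1 by simp
    finally show "gq u1 l2 \<le> gq (x 1) (x 2)" .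
    show "0 \<le> gq u1 l2" using st bx by (intro gq_nonneg) auto
  qed
  finally have p1: "l1' \<le> psi d x 1" unfolding psi_1 .
  have "gq (x 1) (x 2) ^ d \<le> gq l1 u2 ^ d"
  proof (rule power_mono)
    have "gq (x 1) (x 2) \<le> gq l1 (x 2)" using gq_anti[of l1 "x 1" "x 2"] bx st x2 by linarith
    also have "\<dots> \<le> gq l1 u2" using gq_mono[of l1 "x 2" u2] bx st by simp
    finally show "gq (x 1) (x 2) \<le> gq l1 u2" .
    show "0 \<le> gq (x 1) (x 2)" using x1 x2 by (intro gq_nonneg)
  qed
  hence p2: "psi d x 1 \<le> u1'" using st unfolding psi_1 by auto
  have "l2' \<le> hp l1 l2 0 ^ d" using st by simp
  also have "\<dots> \<le> hp (x 1) (x 2) (x 3) ^ d"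
    using st bx x3 by (intro power_mono hp_mono hp_nonneg) auto
  finally have p3: "l2' \<le> psi d x 2" by (simp add: psi_n)
  have "hp (x 1) (x 2) (x 3) ^ d \<le> hp u1 u2 e ^ d"
    using st bx x1 x2 x3 by (intro power_mono hp_mono hp_nonneg) auto
  hence p4: "psi d x 2 \<le> u2'" using st by (simp add: psi_n)
  have p5: "0 \<le> psi d x n \<and> psi d x n \<le> e'" if n: "n \<ge> 3" for n
  proof -
    have xn: "0 \<le> x n" "x n \<le> e" "0 \<le> x (n+1)" "x (n+1) \<le> e" using bx n by auto
    have xm: "0 \<le> x (n-1)" using bx x2 n by (cases "n = 3") auto
    have ps: "psi d x n = hp (x (n-1)) (x n) (x (n+1)) ^ d" using n by (simp add: psi_n)
    have "hp (x (n-1)) (x n) (x (n+1)) ^ d \<le> e'"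
    proof (cases "n = 3")
      case True
      have "hp (x (n-1)) (x n) (x (n+1)) ^ d \<le> hp u2 e e ^ d"
        using True bx xn x2 by (intro power_mono hp_mono hp_nonneg) auto
      thus ?thesis using st by linarith
    next
      case False
      hence "x (n-1) \<le> e" "0 \<le> x (n-1)" using bx n by auto
      hence "hp (x (n-1)) (x n) (x (n+1)) ^ d \<le> hp e e e ^ d"
        using xn by (intro power_mono hp_mono hp_nonneg) auto
      thus ?thesis using st by linarith
    qed
    moreover have "0 \<le> hp (x (n-1)) (x n) (x (n+1)) ^ d" using xn xm by (simp add: hp_nonneg)
    ultimately show ?thesis using ps by simp
  qed
  show ?thesis unfolding cbx_def B' using p1 p2 p3 p4 p5 by simp
qed

definition ccond :: "nat \<Rightarrow> box \<Rightarrow> real \<Rightarrow> real \<Rightarrow> bool" where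
  "ccond d B \<rho> \<theta> \<longleftrightarrow> (case B of (l1,u1,l2,u2,e) \<Rightarrow>
     0 < \<rho> \<and> 0 \<le> \<theta> \<and> \<theta> < 1 \<and>
     real d * gq l1 u2 ^ (d-1) * ((1-l2)/(1+2*l1)^2) + real d * gq l1 u2 ^ (d-1) * (u1/(1+2*l1)) * \<rho> \<le> \<theta> \<and>
     real d * hp u1 u2 e ^ (d-1) * ((1+u2+u2*e)/(1+l1*(1+l2))^2)
       + (real d * hp u1 u2 e ^ (d-1) * (u1*(1+e+u1*e)/(1+l1*(1+l2))^2)
          + real d * hp u1 u2 e ^ (d-1) * (u1*u2/(1+l1*(1+l2)))) * \<rho> \<le> \<theta> * \<rho> \<and>
     real d * hp (max u2 e) e e ^ (d-1) * (1+e+e*e)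
       + real d * hp (max u2 e) e e ^ (d-1) * (max u2 e * (1+e+max u2 e*e))
       + real d * hp (max u2 e) e e ^ (d-1) * (max u2 e * e) \<le> \<theta>)"

definition cdist :: "real \<Rightarrow> real \<Rightarrow> (nat \<Rightarrow> real) \<Rightarrow> (nat \<Rightarrow> real) \<Rightarrow> bool" where
  "cdist \<rho> M x y \<longleftrightarrow> \<bar>x 1 - y 1\<bar> \<le> M \<and> (\<forall>n\<ge>2. \<bar>x n - y n\<bar> \<le> \<rho> * M)"

lemma pow_lip': "1 \<le> d \<Longrightarrow> 0 \<le> p \<Longrightarrow> 0 \<le> q \<Longrightarrow> p \<le> M \<Longrightarrow> q \<le> M \<Longrightarrow>
   \<bar>p ^ d - q ^ d\<bar> \<le> real d * M ^ (d-1) * \<bar>p - q\<bar>"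
  using pow_lip[of p q M "d-1"] by simp

lemma comb3: "0 \<le> (K::real) \<Longrightarrow> 0 \<le> a \<Longrightarrow> 0 \<le> b \<Longrightarrow> 0 \<le> c \<Longrightarrow>
  X \<le> K * (a*p + b*q + c*r) \<Longrightarrow> p \<le> P \<Longrightarrow> q \<le> Q \<Longrightarrow> r \<le> R \<Longrightarrow> X \<le> K * (a*P + b*Q + c*R)"
proof -
  assume h: "0 \<le> K" "0 \<le> a" "0 \<le> b" "0 \<le> c" "X \<le> K * (a*p + b*q + c*r)" "p \<le> P" "q \<le> Q" "r \<le> R"
  have "a*p \<le> a*P" by (metis h(2,6) mult_left_mono)
  moreover have "b*q \<le> b*Q" by (metis h(3,7) mult_left_mono)
  moreover have "c*r \<le> c*R" by (metis h(4,8) mult_left_mono)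
  ultimately have "a*p + b*q + c*r \<le> a*P + b*Q + c*R" by linarith
  hence "K * (a*p + b*q + c*r) \<le> K * (a*P + b*Q + c*R)" using h by (intro mult_left_mono) auto
  thus ?thesis using h by linarith
qed

lemma contract:
  assumes d: "1 \<le> d" and st: "cstep d B B" and cc: "ccond d B \<rho> \<theta>"
    and bx: "cbx B x" and bxy: "cbx B y" and cd: "cdist \<rho> M x y" and M: "0 \<le> M"
  shows "cdist \<rho> (\<theta> * M) (psi d x) (psi d y)"
proof -
  obtain l1 u1 l2 u2 e where B: "B = (l1,u1,l2,u2,e)" using prod_cases5 by blast
  note st = st[unfolded cstep_def B prod.case]
  note bx = bx[unfolded cbx_def B prod.case]
  note bxy = bxy[unfolded cbx_def B prod.case]
  note cc = cc[unfolded ccond_def B prod.case]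
  note cd = cd[unfolded cdist_def]
  have rho: "0 < \<rho>" using cc by simp
  have x1: "0 \<le> x 1" "x 1 \<le> 1" "0 \<le> y 1" "y 1 \<le> 1" using st bx bxy by auto
  have x2: "0 \<le> x 2" "x 2 \<le> 1" "0 \<le> y 2" "y 2 \<le> 1" using st bx bxy by auto
  have l12: "l1 \<le> u1" "l2 \<le> u2" using bx by auto
  have e0: "0 \<le> e" using st by simp
  have c1: "\<bar>psi d x 1 - psi d y 1\<bar> \<le> \<theta> * M"
  proof -
    define Mg where "Mg = gq l1 u2"
    have gb: "0 \<le> gq (z 1) (z 2) \<and> gq (z 1) (z 2) \<le> Mg" if "l1 \<le> z 1" "z 1 \<le> u1" "l2 \<le> z 2" "z 2 \<le> u2" for z
    proof
      show "0 \<le> gq (z 1) (z 2)" using that st by (intro gq_nonneg) linarith+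
      have "gq (z 1) (z 2) \<le> gq l1 (z 2)" using gq_anti[of l1 "z 1" "z 2"] that st by linarith
      also have "\<dots> \<le> gq l1 u2" using gq_mono[of l1 "z 2" u2] that st by simp
      finally show "gq (z 1) (z 2) \<le> Mg" unfolding Mg_def .
    qed
    have gx: "0 \<le> gq (x 1) (x 2)" "gq (x 1) (x 2) \<le> Mg" using gb[of x] bx by auto
    have Mg0: "0 \<le> real d * Mg ^ (d-1)" using gx by simp
    have gy: "0 \<le> gq (y 1) (y 2)" "gq (y 1) (y 2) \<le> Mg" using gb[of y] bxy by auto
    have "\<bar>psi d x 1 - psi d y 1\<bar> \<le> real d * Mg ^ (d-1) * \<bar>gq (x 1) (x 2) - gq (y 1) (y 2)\<bar>"
      unfolding psi_1 using pow_lip'[OF d gx(1) gy(1) gx(2) gy(2)] .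
    also have "\<dots> \<le> real d * Mg ^ (d-1) * ((1 - l2) / (1+2*l1)^2 * \<bar>x 1 - y 1\<bar> + u1 / (1+2*l1) * \<bar>x 2 - y 2\<bar> + 0 * 0)"
      using gq_lip[of l1 "x 1" u1 "y 1" l2 "x 2" u2 "y 2"] st bx bxy
      using Mg0 by (intro mult_left_mono) auto
    finally have F: "\<bar>psi d x 1 - psi d y 1\<bar> \<le> real d * Mg ^ (d-1) * ((1 - l2) / (1+2*l1)^2 * \<bar>x 1 - y 1\<bar> + u1 / (1+2*l1) * \<bar>x 2 - y 2\<bar> + 0 * 0)" .
    have "\<bar>psi d x 1 - psi d y 1\<bar> \<le> real d * Mg ^ (d-1) * ((1 - l2) / (1+2*l1)^2 * M + u1 / (1+2*l1) * (\<rho> * M) + 0 * 0)"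
      by (rule comb3[OF _ _ _ _ F]) (use cd st l12 gx Mg0 in auto)
    also have "\<dots> = (real d * Mg ^ (d-1) * ((1 - l2) / (1+2*l1)^2) + real d * Mg ^ (d-1) * (u1 / (1+2*l1)) * \<rho>) * M"
      by (simp add: algebra_simps)
    also have "\<dots> \<le> \<theta> * M" using cc M unfolding Mg_def by (intro mult_right_mono) auto
    finally show ?thesis .
  qed
  have c2: "\<bar>psi d x 2 - psi d y 2\<bar> \<le> \<rho> * (\<theta> * M)"
  proof -
    define Mh where "Mh = hp u1 u2 e"
    have hb: "0 \<le> hp (z 1) (z 2) (z 3) \<and> hp (z 1) (z 2) (z 3) \<le> Mh" if "l1 \<le> z 1" "z 1 \<le> u1" "l2 \<le> z 2" "z 2 \<le> u2" "0 \<le> z 3" "z 3 \<le> e" for z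
      using that st unfolding Mh_def by (intro conjI hp_nonneg hp_mono) auto
    have hx: "0 \<le> hp (x 1) (x 2) (x 3)" "hp (x 1) (x 2) (x 3) \<le> Mh" using hb[of x] bx by auto
    have Mh0: "0 \<le> real d * Mh ^ (d-1)" using hx by simp
    have hy: "0 \<le> hp (y 1) (y 2) (y 3)" "hp (y 1) (y 2) (y 3) \<le> Mh" using hb[of y] bxy by auto
    have "\<bar>psi d x 2 - psi d y 2\<bar> \<le> real d * Mh ^ (d-1) * \<bar>hp (x 1) (x 2) (x 3) - hp (y 1) (y 2) (y 3)\<bar>"
      using pow_lip'[OF d hx(1) hy(1) hx(2) hy(2)] by (simp add: psi_n)
    also have "\<dots> \<le> real d * Mh ^ (d-1) * ((1+u2+u2*e) / (1+l1*(1+l2))^2 * \<bar>x 1 - y 1\<bar>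
     + u1*(1+e+u1*e) / (1+l1*(1+l2))^2 * \<bar>x 2 - y 2\<bar> + u1*u2 / (1+l1*(1+l2)) * \<bar>x 3 - y 3\<bar>)"
      using hp_lip[of l1 "x 1" u1 "y 1" l2 "x 2" u2 "y 2" 0 "x 3" e "y 3"] st bx bxy
      using Mh0 by (intro mult_left_mono) auto
    finally have F: "\<bar>psi d x 2 - psi d y 2\<bar> \<le> real d * Mh ^ (d-1) * ((1+u2+u2*e) / (1+l1*(1+l2))^2 * \<bar>x 1 - y 1\<bar>
     + u1*(1+e+u1*e) / (1+l1*(1+l2))^2 * \<bar>x 2 - y 2\<bar> + u1*u2 / (1+l1*(1+l2)) * \<bar>x 3 - y 3\<bar>)" .
    have "\<bar>psi d x 2 - psi d y 2\<bar> \<le> real d * Mh ^ (d-1) * ((1+u2+u2*e) / (1+l1*(1+l2))^2 * M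
     + u1*(1+e+u1*e) / (1+l1*(1+l2))^2 * (\<rho> * M) + u1*u2 / (1+l1*(1+l2)) * (\<rho> * M))"
      by (rule comb3[OF _ _ _ _ F]) (use cd st l12 hx bx Mh0 in auto)
    also have "\<dots> = (real d * Mh ^ (d-1) * ((1+u2+u2*e) / (1+l1*(1+l2))^2)
       + (real d * Mh ^ (d-1) * (u1*(1+e+u1*e) / (1+l1*(1+l2))^2)
          + real d * Mh ^ (d-1) * (u1*u2/(1+l1*(1+l2)))) * \<rho>) * M"
      by (simp add: algebra_simps)
    also have "\<dots> \<le> (\<theta> * \<rho>) * M" using cc M unfolding Mh_def by (intro mult_right_mono) auto
    finally show ?thesis by (simp add: algebra_simps)
  qed
  have c3: "\<bar>psi d x n - psi d y n\<bar> \<le> \<rho> * (\<theta> * M)" if n: "n \<ge> 3" for n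
  proof -
    define A where "A = max u2 e"
    define Mh where "Mh = hp A e e"
    have zb: "0 \<le> z (n-1) \<and> z (n-1) \<le> A \<and> 0 \<le> z n \<and> z n \<le> e \<and> 0 \<le> z (n+1) \<and> z (n+1) \<le> e"
      if "l2 \<le> z 2" "z 2 \<le> u2" "\<forall>n\<ge>3. 0 \<le> z n \<and> z n \<le> e" for z
    proof -
      have "0 \<le> z (n-1) \<and> z (n-1) \<le> A"
      proof (cases "n = 3")
        case True thus ?thesis using that st unfolding A_def by auto
      next
        case False
        hence "3 \<le> n - 1" using n by auto
        thus ?thesis using that(3)[rule_format, of "n-1"] unfolding A_def by auto
      qed
      thus ?thesis using that n by auto
    qed
    have zx: "0 \<le> x (n-1) \<and> x (n-1) \<le> A \<and> 0 \<le> x n \<and> x n \<le> e \<and> 0 \<le> x (n+1) \<and> x (n+1) \<le> e"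
      using zb[of x] bx by auto
    have zy: "0 \<le> y (n-1) \<and> y (n-1) \<le> A \<and> 0 \<le> y n \<and> y n \<le> e \<and> 0 \<le> y (n+1) \<and> y (n+1) \<le> e"
      using zb[of y] bxy by auto
    have hx: "0 \<le> hp (x (n-1)) (x n) (x (n+1))" "hp (x (n-1)) (x n) (x (n+1)) \<le> Mh"
      using zx unfolding Mh_def by (auto intro!: hp_nonneg hp_mono)
    have hy: "0 \<le> hp (y (n-1)) (y n) (y (n+1))" "hp (y (n-1)) (y n) (y (n+1)) \<le> Mh"
      using zy unfolding Mh_def by (auto intro!: hp_nonneg hp_mono)
    have Mh0: "0 \<le> real d * Mh ^ (d-1)" using hx by simp
    have "\<bar>psi d x n - psi d y n\<bar> \<le> real d * Mh ^ (d-1) * \<bar>hp (x (n-1)) (x n) (x (n+1)) - hp (y (n-1)) (y n) (y (n+1))\<bar>"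
      using pow_lip'[OF d hx(1) hy(1) hx(2) hy(2)] n by (simp add: psi_n)
    also have "\<dots> \<le> real d * Mh ^ (d-1) * ((1+e+e*e) / (1+0*(1+0))^2 * \<bar>x (n-1) - y (n-1)\<bar>
     + A*(1+e+A*e) / (1+0*(1+0))^2 * \<bar>x n - y n\<bar> + A*e / (1+0*(1+0)) * \<bar>x (n+1) - y (n+1)\<bar>)"
      using hp_lip[of 0 "x (n-1)" A "y (n-1)" 0 "x n" e "y n" 0 "x (n+1)" e "y (n+1)"] zx zy
      using Mh0 by (intro mult_left_mono) auto
    finally have F: "\<bar>psi d x n - psi d y n\<bar> \<le> real d * Mh ^ (d-1) * ((1+e+e*e) / (1+0*(1+0))^2 * \<bar>x (n-1) - y (n-1)\<bar>
     + A*(1+e+A*e) / (1+0*(1+0))^2 * \<bar>x n - y n\<bar> + A*e / (1+0*(1+0)) * \<bar>x (n+1) - y (n+1)\<bar>)" .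
    have Mh0: "0 \<le> real d * Mh ^ (d-1)" using hx by simp
    have "\<bar>psi d x n - psi d y n\<bar> \<le> real d * Mh ^ (d-1) * ((1+e+e*e) / (1+0*(1+0))^2 * (\<rho> * M)
     + A*(1+e+A*e) / (1+0*(1+0))^2 * (\<rho> * M) + A*e / (1+0*(1+0)) * (\<rho> * M))"
    proof (rule comb3[OF _ _ _ _ F])
      show "\<bar>x (n-1) - y (n-1)\<bar> \<le> \<rho> * M" using cd n by auto
    qed (use cd n e0 zx hx Mh0 in auto)
    also have "\<dots> = (real d * Mh ^ (d-1) * (1+e+e*e) + real d * Mh ^ (d-1) * (A*(1+e+A*e))
        + real d * Mh ^ (d-1) * (A*e)) * (\<rho> * M)"
      by (simp add: algebra_simps)
    also have "\<dots> \<le> \<theta> * (\<rho> * M)" using cc M rho unfolding Mh_def A_def by (intro mult_right_mono) auto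
    finally show ?thesis by (simp add: algebra_simps)
  qed
  show ?thesis unfolding cdist_def using c1 c2 c3
    by (metis le_antisym nat_le_linear not_less_eq_eq numeral_2_eq_2 numeral_3_eq_3)
qed



definition Tb :: "nat \<Rightarrow> real \<Rightarrow> (nat \<Rightarrow> real) \<Rightarrow> bool" where
  "Tb N t x \<longleftrightarrow> (\<forall>n\<ge>1. 0 \<le> x n \<and> x n \<le> 1) \<and> (\<forall>n\<ge>N. x n \<le> t)"

lemma psi_1': "psi d x (Suc 0) = gq (x (Suc 0)) (x 2) ^ d"
  using psi_1[of d x] by simp

lemma hp_111: "hp 1 1 1 = 1" by (simp add: hp_def)
lemma hp_ttt: "0 \<le> t \<Longrightarrow> hp t t t = t"
proof -
  assume "0 \<le> t"
  hence "1 + t + t*t > 0" by (intro add_pos_nonneg) auto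
  thus ?thesis by (simp add: hp_def)
qed
lemma hp_11t: "hp 1 1 t = (2 + t) / 3" by (simp add: hp_def)
lemma hp_1tt: "hp 1 t t = (1 + t + t*t) / (2 + t)" by (simp add: hp_def)

lemma psi_unit:
  assumes "\<forall>n\<ge>1. 0 \<le> x n \<and> x n \<le> 1" "n \<ge> 1"
  shows "0 \<le> psi d x n \<and> psi d x n \<le> 1"
proof (cases "n = 1")
  case True
  have "0 \<le> gq (x 1) (x 2)" "gq (x 1) (x 2) \<le> 1" using assms(1) by (auto intro!: gq_nonneg gq_le1)
  thus ?thesis using True by (simp add: psi_1' power_le_one)
next
  case False
  hence n: "n \<ge> 2" using assms by auto
  have xs: "0 \<le> x (n-1)" "x (n-1) \<le> 1" "0 \<le> x n" "x n \<le> 1" "0 \<le> x (n+1)" "x (n+1) \<le> 1"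
    using assms n by auto
  have "0 \<le> hp (x (n-1)) (x n) (x (n+1))" using xs by (intro hp_nonneg)
  moreover have "hp (x (n-1)) (x n) (x (n+1)) \<le> hp 1 1 1" using xs by (intro hp_mono) auto
  ultimately show ?thesis using n by (simp add: psi_n hp_111 power_le_one)
qed

lemma Tb_mono: "Tb N t x \<Longrightarrow> t \<le> t' \<Longrightarrow> Tb N t' x"
  unfolding Tb_def by force

lemma pow_le_base: "1 \<le> d \<Longrightarrow> 0 \<le> (a::real) \<Longrightarrow> a \<le> 1 \<Longrightarrow> a ^ d \<le> a"
  using power_decreasing[of 1 d a] by simp

lemma Tb_step:
  assumes d: "1 \<le> d" and N: "3 \<le> N" and t: "0 \<le> t" "t < 1" and T: "Tb N t x"
  shows "Tb (N-1) (max t (max (hp 1 t t ^ d) (hp 1 1 t ^ d))) (psi d x)"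
proof -
  have u: "\<forall>n\<ge>1. 0 \<le> x n \<and> x n \<le> 1" using T by (simp add: Tb_def)
  have tl: "\<forall>n\<ge>N. x n \<le> t" using T by (simp add: Tb_def)
  have "psi d x n \<le> max t (max (hp 1 t t ^ d) (hp 1 1 t ^ d))" if n: "n \<ge> N - 1" for n
  proof -
    have n2: "n \<ge> 2" using n N by auto
    have xs: "0 \<le> x (n-1)" "x (n-1) \<le> 1" "0 \<le> x n" "x n \<le> 1" "0 \<le> x (n+1)" "x (n+1) \<le> 1"
      using u n2 by auto
    have ps: "psi d x n = hp (x (n-1)) (x n) (x (n+1)) ^ d" using n2 by (simp add: psi_n)
    have h0: "0 \<le> hp (x (n-1)) (x n) (x (n+1))" using xs by (intro hp_nonneg)
    consider "n = N - 1" | "n = N" | "n \<ge> N + 1" using n by linarith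
    thus ?thesis
    proof cases
      case 1
      have "x (n+1) \<le> t" using tl 1 N by auto
      hence "hp (x (n-1)) (x n) (x (n+1)) ^ d \<le> hp 1 1 t ^ d"
        using xs h0 by (intro power_mono hp_mono) auto
      thus ?thesis using ps by linarith
    next
      case 2
      have "x n \<le> t" "x (n+1) \<le> t" using tl 2 by auto
      hence "hp (x (n-1)) (x n) (x (n+1)) ^ d \<le> hp 1 t t ^ d"
        using xs h0 by (intro power_mono hp_mono) auto
      thus ?thesis using ps by linarith
    next
      case 3
      have "x (n-1) \<le> t" "x n \<le> t" "x (n+1) \<le> t" using tl 3 by auto
      hence "hp (x (n-1)) (x n) (x (n+1)) ^ d \<le> hp t t t ^ d"
        using xs h0 by (intro power_mono hp_mono) auto
      also have "\<dots> \<le> t" using hp_ttt[OF t(1)] pow_le_base[OF d t(1)] t by simp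
      finally show ?thesis using ps by linarith
    qed
  qed
  moreover have "\<forall>n\<ge>1. 0 \<le> psi d x n \<and> psi d x n \<le> 1" using psi_unit[OF u] by blast
  ultimately show ?thesis unfolding Tb_def by auto
qed

lemma Tb_step_lt1:
  assumes d: "1 \<le> d" and t: "0 \<le> t" "t < 1"
  shows "max t (max (hp 1 t t ^ d) (hp 1 1 t ^ d)) < 1" "0 \<le> max t (max (hp 1 t t ^ d) (hp 1 1 t ^ d))"
proof -
  have a: "hp 1 t t < 1"
  proof -
    have "t * t < 1" using t by (metis mult_less_cancel_right1 mult_nonneg_nonneg not_le order_le_less_trans less_eq_real_def)
    thus ?thesis using t unfolding hp_1tt by (simp add: divide_simps)
  qed
  have b: "hp 1 1 t < 1" using t unfolding hp_11t by simp
  have a0: "0 \<le> hp 1 t t" "0 \<le> hp 1 1 t" using t by (auto intro!: hp_nonneg)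
  have "hp 1 t t ^ d < 1" using a a0 d by (meson order_le_less_trans pow_le_base less_imp_le)
  moreover have "hp 1 1 t ^ d < 1" using b a0 d by (meson order_le_less_trans pow_le_base less_imp_le)
  ultimately show "max t (max (hp 1 t t ^ d) (hp 1 1 t ^ d)) < 1" using t by simp
  show "0 \<le> max t (max (hp 1 t t ^ d) (hp 1 1 t ^ d))" using t by simp
qed

lemma phi_bound:
  assumes d: "2 \<le> d" and t: "9/10 \<le> t" "t \<le> 1"
  shows "hp 1 t t ^ d \<le> t - (1 - t) / 5" "0 \<le> hp 1 t t ^ d"
proof -
  have h0: "0 \<le> hp 1 t t" using t by (intro hp_nonneg) auto
  have h1: "hp 1 t t \<le> 1"
  proof -
    have "t * t \<le> 1" using t by (simp add: mult_le_one)
    thus ?thesis using t unfolding hp_1tt by (simp add: divide_simps)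
  qed
  have "hp 1 t t ^ d \<le> hp 1 t t ^ 2" using power_decreasing[OF d h0 h1] .
  also have "\<dots> \<le> t - (1 - t) / 5"
  proof -
    have t2: "t*t \<ge> 81/100" using t mult_mono[of "9/10" t "9/10" t] by simp
    have t3: "t*t*t \<ge> 729/1000" using t2 t mult_mono[of "81/100" "t*t" "9/10" t] by simp
    have poly: "0 \<le> 5*(t*t*t) + 9*(t*t) + t - 9" using t2 t3 t by linarith
    have id: "(6*t-1)*((2+t)*(2+t)) - 5*((1+t+t*t)*(1+t+t*t)) = (1-t)*(5*(t*t*t)+9*(t*t)+t-9)"
      by (simp add: algebra_simps)
    have "0 \<le> (1-t)*(5*(t*t*t)+9*(t*t)+t-9)" using poly t by simp
    hence ineq: "5*((1+t+t*t)*(1+t+t*t)) \<le> (6*t-1)*((2+t)*(2+t))" using id by linarith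
    have p: "0 < (2+t)*(2+t)" using t by simp
    have "hp 1 t t ^ 2 = ((1+t+t*t)*(1+t+t*t)) / ((2+t)*(2+t))"
      unfolding hp_1tt by (simp add: power2_eq_square)
    also have "\<dots> \<le> t - (1 - t) / 5"
      using ineq p by (simp add: divide_simps)
    finally show ?thesis .
  qed
  finally show "hp 1 t t ^ d \<le> t - (1 - t) / 5" .
  show "0 \<le> hp 1 t t ^ d" using h0 by simp
qed

lemma Tb2_step:
  assumes d: "2 \<le> d" and t: "9/10 \<le> t" "t \<le> 1" and T: "Tb 2 t x"
  shows "Tb 2 (hp 1 t t ^ d) (psi d x)"
proof -
  have u: "\<forall>n\<ge>1. 0 \<le> x n \<and> x n \<le> 1" using T by (simp add: Tb_def)
  have tl: "\<forall>n\<ge>2. x n \<le> t" using T by (simp add: Tb_def)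
  have "psi d x n \<le> hp 1 t t ^ d" if n2: "n \<ge> 2" for n
  proof -
    have xs: "0 \<le> x (n-1)" "x (n-1) \<le> 1" "0 \<le> x n" "x n \<le> t" "0 \<le> x (n+1)" "x (n+1) \<le> t"
      using u tl n2 by auto
    have ps: "psi d x n = hp (x (n-1)) (x n) (x (n+1)) ^ d" using n2 by (simp add: psi_n)
    have h0: "0 \<le> hp (x (n-1)) (x n) (x (n+1))" using xs by (intro hp_nonneg)
    have "hp (x (n-1)) (x n) (x (n+1)) ^ d \<le> hp 1 t t ^ d"
      using xs h0 by (intro power_mono hp_mono) auto
    thus ?thesis using ps by linarith
  qed
  moreover have "\<forall>n\<ge>1. 0 \<le> psi d x n \<and> psi d x n \<le> 1" using psi_unit[OF u] by blast
  ultimately show ?thesis unfolding Tb_def by auto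
qed

lemma phaseA1:
  assumes d: "1 \<le> d"
  shows "Tb (m+2) t x \<Longrightarrow> 0 \<le> t \<Longrightarrow> t < 1 \<Longrightarrow> \<exists>j t'. 0 \<le> t' \<and> t' < 1 \<and> Tb 2 t' ((psi d ^^ j) x)"
proof (induction m arbitrary: t x)
  case 0 thus ?case by (metis add_0 funpow_0)
next
  case (Suc m)
  let ?t = "max t (max (hp 1 t t ^ d) (hp 1 1 t ^ d))"
  have "Tb (m+2) ?t (psi d x)" using Tb_step[OF d _ Suc.prems(2,3), of "Suc m + 2" x] Suc.prems(1) by simp
  then obtain j t' where "0 \<le> t'" "t' < 1" "Tb 2 t' ((psi d ^^ j) (psi d x))"
    using Suc.IH Tb_step_lt1[OF d Suc.prems(2,3)] by blast
  thus ?case by (metis comp_apply funpow_Suc_right)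
qed

lemma phaseA2:
  assumes d: "2 \<le> d" and T: "Tb 2 t0 x" and t0: "9/10 \<le> t0" "t0 < 1"
  shows "\<exists>j. Tb 2 (9/10) ((psi d ^^ j) x)"
proof -
  have inv: "Tb 2 (9/10) ((psi d ^^ j) x) \<or> (\<exists>t. Tb 2 t ((psi d ^^ j) x) \<and> 9/10 < t \<and> t < 1 \<and> (6/5)^j * (1 - t0) \<le> 1 - t)" for j
  proof (induction j)
    case 0
    show ?case
    proof (cases "t0 = 9/10")
      case True
      have "Tb 2 (9/10) ((psi d ^^ 0) x)" using T unfolding True by simp
      thus ?thesis by blast
    next
      case False thus ?thesis using T t0 by auto
    qed
  next
    case (Suc j)
    let ?y = "(psi d ^^ j) x"
    have eq: "(psi d ^^ Suc j) x = psi d ?y" by simp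
    from Suc.IH show ?case
    proof
      assume a: "Tb 2 (9/10) ?y"
      have "Tb 2 (hp 1 (9/10) (9/10) ^ d) (psi d ?y)" using Tb2_step[OF d _ _ a] by simp
      moreover have "hp 1 (9/10) (9/10) ^ d \<le> 9/10" using phi_bound[OF d, of "9/10"] by simp
      ultimately show ?case using Tb_mono eq by metis
    next
      assume "\<exists>t. Tb 2 t ?y \<and> 9/10 < t \<and> t < 1 \<and> (6/5)^j * (1 - t0) \<le> 1 - t"
      then obtain t where tt: "Tb 2 t ?y" "9/10 < t" "t < 1" "(6/5)^j * (1 - t0) \<le> 1 - t" by blast
      have T': "Tb 2 (hp 1 t t ^ d) (psi d ?y)" using Tb2_step[OF d _ _ tt(1)] tt by simp
      have pb: "hp 1 t t ^ d \<le> t - (1 - t) / 5" using phi_bound[OF d, of t] tt by simp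
      have gr: "(6/5)^(Suc j) * (1 - t0) \<le> 1 - hp 1 t t ^ d"
      proof -
        have "(6/5)^(Suc j) * (1 - t0) = 6/5 * ((6/5)^j * (1 - t0))" by simp
        also have "\<dots> \<le> 6/5 * (1 - t)" using tt(4) by (intro mult_left_mono) auto
        also have "\<dots> \<le> 1 - hp 1 t t ^ d"
        proof -
          have "t - (1-t)/5 = 1 - 6/5*(1-t)" by (simp add: field_simps)
          thus ?thesis using pb by linarith
        qed
        finally show ?thesis .
      qed
      show ?case
      proof (cases "hp 1 t t ^ d \<le> 9/10")
        case True thus ?thesis using T' Tb_mono eq by metis
      next
        case False
        have "0 < (6/5::real)^(Suc j) * (1 - t0)" using t0 by simp
        hence "hp 1 t t ^ d < 1" using gr by linarith
        thus ?thesis using T' False gr eq by auto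
      qed
    qed
  qed
  obtain j where j: "1 / (1 - t0) < (6/5::real)^j" using real_arch_pow[of "6/5::real" "1/(1-t0)"] by auto
  have "1 < (6/5::real)^j * (1 - t0)" using j t0 by (simp add: divide_simps)
  hence "\<not> (\<exists>t. Tb 2 t ((psi d ^^ j) x) \<and> 9/10 < t \<and> t < 1 \<and> (6/5)^j * (1 - t0) \<le> 1 - t)" by auto
  thus ?thesis using inv[of j] by blast
qed

lemma phaseA:
  assumes d: "2 \<le> d" and T: "Tb N t x" and N: "2 \<le> N" and t: "0 \<le> t" "t < 1"
  shows "\<exists>K. Tb 2 (9/10) ((psi d ^^ K) x)"
proof -
  obtain m where m: "N = m + 2" using N by (metis add.commute le_iff_add)
  obtain j t' where j: "0 \<le> t'" "t' < 1" "Tb 2 t' ((psi d ^^ j) x)"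
    using phaseA1[of d m t x] d T t m by auto
  have "Tb 2 (max t' (9/10)) ((psi d ^^ j) x)" using Tb_mono j(3) by fastforce
  then obtain i where "Tb 2 (9/10) ((psi d ^^ i) ((psi d ^^ j) x))"
    using phaseA2[OF d, of "max t' (9/10)"] j by auto
  thus ?thesis by (metis comp_apply funpow_add)
qed

lemma Tb2_inv: "2 \<le> d \<Longrightarrow> Tb 2 (9/10) x \<Longrightarrow> Tb 2 (9/10) ((psi d ^^ j) x)"
proof (induction j)
  case 0 thus ?case by simp
next
  case (Suc j)
  have "Tb 2 (hp 1 (9/10) (9/10) ^ d) (psi d ((psi d ^^ j) x))" using Tb2_step[OF Suc.prems(1) _ _ Suc.IH[OF Suc.prems]] by simp
  moreover have "hp 1 (9/10) (9/10) ^ d \<le> 9/10" using phi_bound[OF Suc.prems(1), of "9/10"] by simp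
  ultimately show ?case using Tb_mono by auto
qed



definition zc :: "(nat \<Rightarrow> real) \<Rightarrow> bool" where
  "zc x \<longleftrightarrow> (\<forall>n\<ge>1. x n = 0 \<longrightarrow> x (Suc n) = 0)"

lemma gq_pos: "0 \<le> a \<Longrightarrow> 0 \<le> b \<Longrightarrow> 0 < gq a b"
  unfolding gq_def by (intro divide_pos_pos add_pos_nonneg) auto

lemma zc_psi:
  assumes d: "1 \<le> d" and u: "\<forall>n\<ge>1. 0 \<le> x n \<and> x n \<le> 1" and z: "zc x"
  shows "zc (psi d x)"
  unfolding zc_def
proof (intro allI impI)
  fix n :: nat assume n: "1 \<le> n" and p0: "psi d x n = 0"
  have n2: "n \<ge> 2"
  proof (rule ccontr)
    assume "\<not> n \<ge> 2"
    hence "n = 1" using n by auto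
    moreover have "0 < gq (x 1) (x 2)" using u by (intro gq_pos) auto
    ultimately show False using p0 by (simp add: psi_1')
  qed
  have xs: "0 \<le> x (n-1)" "0 \<le> x n" "0 \<le> x (n+1)" using u n2 by auto
  have "hp (x (n-1)) (x n) (x (n+1)) = 0" using p0 n2 by (simp add: psi_n)
  hence "x (n-1) = 0"
  proof -
    assume h: "hp (x (n-1)) (x n) (x (n+1)) = 0"
    have "0 < 1 + x n + x n * x (n+1)" using xs by (intro add_pos_nonneg) auto
    moreover have "0 < 1 + x (n-1) + x (n-1) * x n" using xs by (intro add_pos_nonneg) auto
    ultimately show ?thesis using h unfolding hp_def by auto
  qed
  hence "x n = 0" using z n2 unfolding zc_def by (metis One_nat_def Suc_diff_1 Suc_le_eq less_le_trans numeral_2_eq_2 le_simps(3) one_le_numeral le_numeral_extra(4) not_less_eq_eq)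
  hence "hp (x n) (x (Suc n)) (x (Suc n + 1)) = 0" unfolding hp_def by simp
  thus "psi d x (Suc n) = 0" using n2 d by (simp add: psi_n)
qed

lemma zc_prop: "zc x \<Longrightarrow> x j = 0 \<Longrightarrow> 1 \<le> j \<Longrightarrow> j \<le> n \<Longrightarrow> x n = 0"
proof (induction n)
  case 0 thus ?case by simp
next
  case (Suc n)
  show ?case
  proof (cases "j = Suc n")
    case True thus ?thesis using Suc by simp
  next
    case False
    hence "x n = 0" "1 \<le> n" using Suc by auto
    thus ?thesis using Suc.prems(1) unfolding zc_def by blast
  qed
qed

lemma conv_geom:
  fixes X :: "nat \<Rightarrow> real"
  assumes th: "0 \<le> \<theta>" "\<theta> < 1" and b: "\<And>j. \<bar>X (Suc (k0 + j)) - X (k0 + j)\<bar> \<le> C * \<theta> ^ j"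
  shows "convergent X"
proof -
  define Y where "Y j = X (j + k0)" for j
  have sg: "summable (\<lambda>j. C * \<theta> ^ j)" using th by (intro summable_mult summable_geometric) auto
  have "summable (\<lambda>j. Y (Suc j) - Y j)"
    by (rule summable_comparison_test[OF _ sg]) (use b in \<open>auto simp: Y_def add.commute\<close>)
  hence "(\<lambda>m. \<Sum>j<m. Y (Suc j) - Y j) \<longlonglongrightarrow> (\<Sum>j. Y (Suc j) - Y j)" by (rule summable_LIMSEQ)
  hence "(\<lambda>m. Y m - Y 0) \<longlonglongrightarrow> (\<Sum>j. Y (Suc j) - Y j)" by (simp add: sum_lessThan_telescope)
  hence "(\<lambda>m. Y m - Y 0 + Y 0) \<longlonglongrightarrow> (\<Sum>j. Y (Suc j) - Y j) + Y 0" by (intro tendsto_intros)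
  hence "(\<lambda>m. X (m + k0)) \<longlonglongrightarrow> (\<Sum>j. Y (Suc j) - Y j) + Y 0" by (simp add: Y_def)
  hence "X \<longlonglongrightarrow> (\<Sum>j. Y (Suc j) - Y j) + Y 0" by (rule LIMSEQ_offset)
  thus ?thesis unfolding convergent_def by blast
qed

fun chain :: "nat \<Rightarrow> box list \<Rightarrow> bool" where
  "chain d (B # B' # rest) = (cstep d B B' \<and> chain d (B' # rest))"
| "chain d _ = True"

lemma chain_cbx: "chain d (B # rest) \<Longrightarrow> cbx B x \<Longrightarrow> cbx (last (B # rest)) ((psi d ^^ length rest) x)"
proof (induction rest arbitrary: B x)
  case Nil thus ?case by simp
next
  case (Cons B' rest)
  have "cstep d B B'" "chain d (B' # rest)" using Cons.prems by auto
  moreover have "cbx B' (psi d x)" using cstep_cbx calculation(1) Cons.prems(2) by blast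
  ultimately have "cbx (last (B' # rest)) ((psi d ^^ length rest) (psi d x))" using Cons.IH by blast
  thus ?case by (simp add: funpow_Suc_right del: funpow.simps)
qed

lemma cstep_inv: "cstep d B B \<Longrightarrow> cbx B x \<Longrightarrow> cbx B ((psi d ^^ j) x)"
  by (induction j) (auto intro: cstep_cbx)



lemma in_Rset:
  fixes x :: "nat \<Rightarrow> real"
  assumes x0: "x 0 = 0" and u: "\<forall>n\<ge>1. 0 \<le> x n \<and> x n \<le> 1"
    and tl: "\<forall>n\<ge>2. x n \<le> 9/10" and z: "zc x"
  shows "x \<in> Rset"
proof -
  define p where "p n = (\<Prod>m\<in>{1..n}. x m)" for n
  have p0: "p 0 = 1" by (simp add: p_def)
  have pS: "p (Suc n) = p n * x (Suc n)" for n
    unfolding p_def by (simp add: prod.nat_ivl_Suc' mult.commute)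
  have pnn: "0 \<le> p n" for n unfolding p_def using u by (intro prod_nonneg) auto
  have pb: "p (Suc n) \<le> (9/10)^n" for n
  proof (induction n)
    case 0 thus ?case using u by (simp add: pS p0)
  next
    case (Suc n)
    have "p (Suc (Suc n)) = p (Suc n) * x (Suc (Suc n))" by (rule pS)
    also have "\<dots> \<le> (9/10)^n * (9/10)" using Suc.IH tl u pnn by (intro mult_mono) auto
    finally show ?case by simp
  qed
  have sumS: "summable (\<lambda>n. p (Suc n))"
    by (rule summable_comparison_test[OF _ summable_geometric[of "9/10::real"]]) (use pb pnn in auto)
  hence sp: "summable p" by (simp add: summable_Suc_iff)
  define S0 where "S0 = suminf p"
  have ps: "p sums S0" using sp by (simp add: S0_def summable_sums)
  have hs1: "(p has_sum S0) UNIV" using ps pnn by (intro sums_nonneg_imp_has_sum) auto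
  have ps2: "(\<lambda>n. p (Suc n)) sums (S0 - p 0)" using ps sums_Suc_iff[of p "S0 - p 0"] by simp
  have hs2: "((\<lambda>n. p (Suc n)) has_sum (S0 - 1)) UNIV" using ps2 pnn p0 by (intro sums_nonneg_imp_has_sum) auto
  have S0ge: "1 \<le> S0"
  proof -
    have "sum p {..<1} \<le> suminf p" using sp pnn by (intro sum_le_suminf) auto
    thus ?thesis using p0 by (simp add: S0_def)
  qed
  define q where "q i = p (nat \<bar>i\<bar>)" for i :: int
  have q1: "(q has_sum S0) (range int)"
  proof -
    have "(q \<circ> int) = p" by (auto simp: q_def)
    thus ?thesis using hs1 has_sum_reindex[of int UNIV q S0] by simp
  qed
  have q2: "(q has_sum (S0 - 1)) (range (\<lambda>n. - int (Suc n)))"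
  proof -
    have inj: "inj (\<lambda>n::nat. - int (Suc n))" by (auto simp: inj_def)
    have "(q \<circ> (\<lambda>n. - int (Suc n))) = (\<lambda>n. p (Suc n))" by (auto simp: q_def nat_add_distrib)
    thus ?thesis using hs2 has_sum_reindex[OF inj[unfolded inj_on_def[symmetric]], of q "S0 - 1"]
      by simp
  qed
  have un: "range int \<union> range (\<lambda>n. - int (Suc n)) = UNIV"
  proof -
    have "i \<in> range int \<union> range (\<lambda>n. - int (Suc n))" for i :: int
    proof (cases "i \<ge> 0")
      case True thus ?thesis by (metis UnI1 nonneg_int_cases rangeI)
    next
      case False
      hence "i = - int (Suc (nat (- i - 1)))" by simp
      thus ?thesis by blast
    qed
    thus ?thesis by blast
  qed
  have dj: "range int \<inter> range (\<lambda>n. - int (Suc n)) = {}" by auto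
  define S where "S = 2 * S0 - 1"
  have qS: "(q has_sum S) UNIV" using has_sum_Un_disjoint[OF q1 q2 dj] un by (simp add: S_def)
  have Spos: "0 < S" using S0ge by (simp add: S_def)
  define zz where "zz i = q i / S" for i
  have zS: "(zz has_sum 1) UNIV"
  proof -
    have "((\<lambda>i. inverse S * q i) has_sum (inverse S * S)) UNIV" by (rule has_sum_cmult_right[OF qS])
    moreover have "(\<lambda>i. inverse S * q i) = zz" by (auto simp: zz_def divide_inverse mult.commute)
    ultimately show ?thesis using Spos by simp
  qed
  have qnn: "0 \<le> q i" for i by (simp add: q_def pnn)
  have pnz: "p m \<noteq> 0 \<Longrightarrow> m' \<le> m \<Longrightarrow> p m' \<noteq> 0" for m m'
    unfolding p_def by (auto simp: prod_zero_iff)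
  have zE: "zz \<in> Eset"
    unfolding Eset_def prob_dist_def
  proof (intro CollectI conjI allI impI)
    show "0 \<le> zz i" for i using qnn Spos by (simp add: zz_def)
    show "(zz has_sum 1) UNIV" by (rule zS)
    show "zz i = zz (- i)" for i by (simp add: zz_def q_def)
    fix a b c :: int
    assume h: "a \<le> c \<and> c \<le> b \<and> zz a \<noteq> 0 \<and> zz b \<noteq> 0"
    have "nat \<bar>c\<bar> \<le> nat \<bar>a\<bar> \<or> nat \<bar>c\<bar> \<le> nat \<bar>b\<bar>" using h by linarith
    moreover have "p (nat \<bar>a\<bar>) \<noteq> 0" "p (nat \<bar>b\<bar>) \<noteq> 0" using h by (auto simp: zz_def q_def)
    ultimately have "p (nat \<bar>c\<bar>) \<noteq> 0" using pnz by blast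
    thus "zz c \<noteq> 0" using Spos by (simp add: zz_def q_def)
  qed
  have "Rmap zz = x"
  proof
    fix n :: nat
    show "Rmap zz n = x n"
    proof (cases "n = 0")
      case True thus ?thesis by (simp add: Rmap_def x0)
    next
      case False
      then obtain m where m: "n = Suc m" by (cases n) auto
      have za: "zz (int n - 1) = p m / S" using m by (simp add: zz_def q_def)
      have zb: "zz (int n) = p n / S" by (simp add: zz_def q_def)
      show ?thesis
      proof (cases "p m = 0")
        case True
        then obtain j where j: "j \<in> {1..m}" "x j = 0" unfolding p_def by (auto simp: prod_zero_iff)
        hence "x n = 0" using zc_prop[OF z, of j n] m by auto
        thus ?thesis using za True False by (simp add: Rmap_def)
      next
        case nz: False
        have "Rmap zz n = (p n / S) / (p m / S)" using za zb nz Spos False by (simp add: Rmap_def)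
        also have "\<dots> = x n" using nz Spos m pS by simp
        finally show ?thesis .
      qed
    qed
  qed
  thus ?thesis unfolding Rset_def using zE by blast
qed


lemma chain_consI: "cstep d B B2 \<Longrightarrow> chain d (B2 # rest) \<Longrightarrow> chain d (B # B2 # rest)" by simp
lemma chain_single: "chain d [B]" by simp

lemma gq_ge: "0 \<le> a \<Longrightarrow> w*(1+2*a) \<le> 1+a+a*b \<Longrightarrow> w \<le> gq a b"
  unfolding gq_def by (simp add: divide_simps add_pos_nonneg)
lemma gq_le: "0 \<le> a \<Longrightarrow> 1+a+a*b \<le> w*(1+2*a) \<Longrightarrow> gq a b \<le> w"
  unfolding gq_def by (simp add: divide_simps add_pos_nonneg)
lemma hp_ge: "0 \<le> a \<Longrightarrow> 0 \<le> b \<Longrightarrow> w*(1+a+a*b) \<le> a*(1+b+b*c) \<Longrightarrow> w \<le> hp a b c"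
proof -
  assume h: "0 \<le> a" "0 \<le> b" "w*(1+a+a*b) \<le> a*(1+b+b*c)"
  have "0 < 1+a+a*b" using h by (intro add_pos_nonneg) auto
  thus ?thesis using h unfolding hp_def by (simp add: divide_simps)
qed
lemma hp_le: "0 \<le> a \<Longrightarrow> 0 \<le> b \<Longrightarrow> a*(1+b+b*c) \<le> w*(1+a+a*b) \<Longrightarrow> hp a b c \<le> w"
proof -
  assume h: "0 \<le> a" "0 \<le> b" "a*(1+b+b*c) \<le> w*(1+a+a*b)"
  have "0 < 1+a+a*b" using h by (intro add_pos_nonneg) auto
  thus ?thesis using h unfolding hp_def by (simp add: divide_simps)
qed

lemma cstep_I:
  assumes "0 \<le> l1" "u1 \<le> 1" "0 \<le> l2" "u2 \<le> 1" "0 \<le> e" "e \<le> 1" "0 \<le> u1" "0 \<le> u2"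
   "0 \<le> qa" "qa*(1+2*u1) \<le> 1+u1+u1*l2" "l1' \<le> qa^d"
   "1+l1+l1*u2 \<le> qb*(1+2*l1)" "qb^d \<le> u1'"
   "0 \<le> qc" "qc*(1+l1+l1*l2) \<le> l1*(1+l2+l2*0)" "l2' \<le> qc^d"
   "u1*(1+u2+u2*e) \<le> qd*(1+u1+u1*u2)" "qd^d \<le> u2'"
   "u2*(1+e+e*e) \<le> qe*(1+u2+u2*e)" "qe^d \<le> e'"
   "e*(1+e+e*e) \<le> qf*(1+e+e*e)" "qf^d \<le> e'"
  shows "cstep d (l1,u1,l2,u2,e) (l1',u1',l2',u2',e')"
proof -
  have "qa \<le> gq u1 l2" by (rule gq_ge[OF assms(7,10)])
  hence 1: "l1' \<le> gq u1 l2 ^ d" using assms(9,11) power_mono[of qa "gq u1 l2" d] by linarith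
  have "gq l1 u2 \<le> qb" by (rule gq_le[OF assms(1,12)])
  moreover have "0 \<le> gq l1 u2" using gq_nonneg[OF assms(1,8)] .
  ultimately have 2: "gq l1 u2 ^ d \<le> u1'" using assms(13) power_mono[of "gq l1 u2" qb d] by linarith
  have "qc \<le> hp l1 l2 0" by (rule hp_ge[OF assms(1,3,15)])
  hence 3: "l2' \<le> hp l1 l2 0 ^ d" using assms(14,16) power_mono[of qc "hp l1 l2 0" d] by linarith
  have "hp u1 u2 e \<le> qd" by (rule hp_le[OF assms(7,8,17)])
  hence 4: "hp u1 u2 e ^ d \<le> u2'" using assms(18) power_mono[of "hp u1 u2 e" qd d] hp_nonneg[OF assms(7,8,5)] by linarith
  have "hp u2 e e \<le> qe" by (rule hp_le[OF assms(8,5,19)])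
  hence 5: "hp u2 e e ^ d \<le> e'" using assms(20) power_mono[of "hp u2 e e" qe d] hp_nonneg[OF assms(8,5,5)] by linarith
  have "hp e e e \<le> qf" by (rule hp_le[OF assms(5,5,21)])
  hence 6: "hp e e e ^ d \<le> e'" using assms(22) power_mono[of "hp e e e" qf d] hp_nonneg[OF assms(5,5,5)] by linarith
  show ?thesis unfolding cstep_def prod.case using 1 2 3 4 5 6 assms(1-6) by blast
qed

lemma mono_aux: "0 \<le> K \<Longrightarrow> K \<le> K' \<Longrightarrow> 0 \<le> (c::real) \<Longrightarrow> K * c \<le> K' * c"
  by (rule mult_right_mono)

lemma ccond_I:
  assumes "0 < \<rho>" "0 \<le> \<theta>" "\<theta> < 1" "0 \<le> l1" "0 \<le> l2" "l2 \<le> 1" "0 \<le> u1" "0 \<le> u2" "0 \<le> e"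
    "1+l1+l1*u2 \<le> G*(1+2*l1)" "u1*(1+u2+u2*e) \<le> Hb*(1+u1+u1*u2)" "A = max u2 e"
    "A*(1+e+e*e) \<le> Hc*(1+A+A*e)"
    "real d * G ^ (d-1) * ((1-l2)/(1+2*l1)^2) + real d * G ^ (d-1) * (u1/(1+2*l1)) * \<rho> \<le> \<theta>"
    "real d * Hb ^ (d-1) * ((1+u2+u2*e)/(1+l1*(1+l2))^2)
       + (real d * Hb ^ (d-1) * (u1*(1+e+u1*e)/(1+l1*(1+l2))^2)
          + real d * Hb ^ (d-1) * (u1*u2/(1+l1*(1+l2)))) * \<rho> \<le> \<theta> * \<rho>"
    "real d * Hc ^ (d-1) * (1+e+e*e) + real d * Hc ^ (d-1) * (A * (1+e+A*e))
       + real d * Hc ^ (d-1) * (A * e) \<le> \<theta>"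
  shows "ccond d (l1,u1,l2,u2,e) \<rho> \<theta>"
proof -
  have A0: "0 \<le> A" using assms(8,12) by (simp add: le_max_iff_disj)
  have g: "0 \<le> gq l1 u2" "gq l1 u2 \<le> G" using gq_le[OF assms(4,10)] gq_nonneg[OF assms(4,8)] by auto
  have h2: "0 \<le> hp u1 u2 e" "hp u1 u2 e \<le> Hb" using hp_le[OF assms(7,8,11)] hp_nonneg[OF assms(7,8,9)] by auto
  have h3: "0 \<le> hp A e e" "hp A e e \<le> Hc" using hp_le[OF A0 assms(9,13)] hp_nonneg[OF A0 assms(9,9)] by auto
  define KG where "KG = real d * gq l1 u2 ^ (d-1)"
  define KG' where "KG' = real d * G ^ (d-1)"
  define K2 where "K2 = real d * hp u1 u2 e ^ (d-1)"
  define K2' where "K2' = real d * Hb ^ (d-1)"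
  define K3 where "K3 = real d * hp A e e ^ (d-1)"
  define K3' where "K3' = real d * Hc ^ (d-1)"
  have p1: "0 \<le> KG" "KG \<le> KG'" unfolding KG_def KG'_def using g by (auto intro!: mult_left_mono power_mono)
  have p2: "0 \<le> K2" "K2 \<le> K2'" unfolding K2_def K2'_def using h2 by (auto intro!: mult_left_mono power_mono)
  have p3: "0 \<le> K3" "K3 \<le> K3'" unfolding K3_def K3'_def using h3 by (auto intro!: mult_left_mono power_mono)
  have l1d: "0 < 1+2*l1" "0 < 1+l1*(1+l2)" using assms(4,5) by (auto intro!: add_pos_nonneg)
  have nn: "0 \<le> (1-l2)/(1+2*l1)^2" "0 \<le> u1/(1+2*l1) * \<rho>" "0 \<le> (1+u2+u2*e)/(1+l1*(1+l2))^2"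
    "0 \<le> (u1*(1+e+u1*e)/(1+l1*(1+l2))^2 + u1*u2/(1+l1*(1+l2))) * \<rho>"
    "0 \<le> 1+e+e*e" "0 \<le> A * (1+e+A*e)" "0 \<le> A * e"
    using assms l1d A0 by auto
  have c1: "KG * ((1-l2)/(1+2*l1)^2) + KG * (u1/(1+2*l1) * \<rho>) \<le> \<theta>"
    using mono_aux[OF p1 nn(1)] mono_aux[OF p1 nn(2)] assms(14) unfolding KG'_def by (simp add: mult.assoc)
  have c2: "K2 * ((1+u2+u2*e)/(1+l1*(1+l2))^2) + K2 * ((u1*(1+e+u1*e)/(1+l1*(1+l2))^2 + u1*u2/(1+l1*(1+l2))) * \<rho>) \<le> \<theta> * \<rho>"
  proof -
    have "K2' * ((1+u2+u2*e)/(1+l1*(1+l2))^2) + K2' * ((u1*(1+e+u1*e)/(1+l1*(1+l2))^2 + u1*u2/(1+l1*(1+l2))) * \<rho>) \<le> \<theta> * \<rho>"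
      using assms(15) unfolding K2'_def by (simp add: algebra_simps)
    thus ?thesis using mono_aux[OF p2 nn(3)] mono_aux[OF p2 nn(4)] by linarith
  qed
  have c3: "K3 * (1+e+e*e) + K3 * (A * (1+e+A*e)) + K3 * (A * e) \<le> \<theta>"
    using mono_aux[OF p3 nn(5)] mono_aux[OF p3 nn(6)] mono_aux[OF p3 nn(7)] assms(16) unfolding K3'_def by linarith
  have c1': "real d * gq l1 u2 ^ (d-1) * ((1-l2)/(1+2*l1)^2) + real d * gq l1 u2 ^ (d-1) * (u1/(1+2*l1)) * \<rho> \<le> \<theta>"
    using c1 unfolding KG_def by (simp add: mult.assoc)
  have c2': "real d * hp u1 u2 e ^ (d-1) * ((1+u2+u2*e)/(1+l1*(1+l2))^2)
       + (real d * hp u1 u2 e ^ (d-1) * (u1*(1+e+u1*e)/(1+l1*(1+l2))^2)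
          + real d * hp u1 u2 e ^ (d-1) * (u1*u2/(1+l1*(1+l2)))) * \<rho> \<le> \<theta> * \<rho>"
    using c2 unfolding K2_def by (simp add: algebra_simps)
  have c3': "real d * hp (max u2 e) e e ^ (d-1) * (1+e+e*e) + real d * hp (max u2 e) e e ^ (d-1) * (max u2 e * (1+e+max u2 e*e))
       + real d * hp (max u2 e) e e ^ (d-1) * (max u2 e * e) \<le> \<theta>"
    using c3 unfolding K3_def assms(12) .
  show ?thesis unfolding ccond_def prod.case using assms(1-3) c1' c2' c3' by blast
qed

lemma s2_0: "cstep 2 (0, 1, 0, 9/10, 9/10) (111111/250000, 1, 0, 873259/1000000, 81/100)"
  by (rule cstep_I[where qa="33333333/50000000" and qb="1" and qc="0" and qd="23362069/25000000" and qe="9/10" and qf="9/10"]) (simp_all add: power_divide)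

lemma s2_1: "cstep 2 (111111/250000, 1, 0, 873259/1000000, 81/100) (111111/250000, 941247/1000000, 118343/1250000, 403331/500000, 7/10)"
  by (rule cstep_I[where qa="33333333/50000000" and qb="97017861/100000000" and qc="30769209/100000000" and qd="89814347/100000000" and qe="83451331/100000000" and qf="81/100"]) (simp_all add: power_divide)

lemma s2_2: "cstep 2 (111111/250000, 941247/1000000, 118343/1250000, 403331/500000, 7/10) (99229/200000, 911087/1000000, 107117/1000000, 683119/1000000, 14/25)"
  by (rule cstep_I[where qa="70437579/100000000" and qb="95450873/100000000" and qc="6545771/20000000" and qd="16530201/20000000" and qe="74497991/100000000" and qf="7/10"]) (simp_all add: power_divide)

lemma s2_3: "cstep 2 (99229/200000, 911087/1000000, 107117/1000000, 683119/1000000, 14/25) (253293/500000, 848401/1000000, 1257/10000, 110367/200000, 39/100)"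
  by (rule cstep_I[where qa="71174913/100000000" and qb="92108633/100000000" and qc="4431791/12500000" and qd="37142787/50000000" and qe="30980129/50000000" and qf="14/25"]) (simp_all add: power_divide)

lemma s2_4: "cstep 2 (253293/500000, 848401/1000000, 1257/10000, 110367/200000, 39/100) (525551/1000000, 78717/100000, 8243/62500, 1047/2500, 6/25)"
  by (rule cstep_I[where qa="3624747/5000000" and qb="11090321/12500000" and qc="7263287/20000000" and qd="12942947/20000000" and qe="24079241/50000000" and qf="39/100"]) (simp_all add: power_divide)

lemma s2_5: "cstep 2 (525551/1000000, 78717/100000, 8243/62500, 1047/2500, 6/25) (539567/1000000, 362169/500000, 139119/1000000, 79799/250000, 13/100)"
  by (rule cstep_I[where qa="14691053/20000000" and qb="42553997/50000000" and qc="37298763/100000000" and qd="56497357/100000000" and qe="7153697/20000000" and qf="6/25"]) (simp_all add: power_divide)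

lemma sf2: "cstep 2 (539567/1000000, 362169/500000, 139119/1000000, 79799/250000, 13/100) (539567/1000000, 362169/500000, 139119/1000000, 79799/250000, 13/100)"
  by (rule cstep_I[where qa="74534449/100000000" and qb="41166049/50000000" and qc="7613269/20000000" and qd="12600083/25000000" and qe="13452201/50000000" and qf="13/100"]) (simp_all add: power_divide)

lemma cc2: "ccond 2 (539567/1000000, 362169/500000, 139119/1000000, 79799/250000, 13/100) (11/10) (97/100)"
  by (rule ccond_I[where G="41166049/50000000" and Hb="12600083/25000000" and Hc="13452201/50000000" and A="79799/250000"]) (simp_all add: power_divide)

lemma ch2: "chain 2 [(0, 1, 0, 9/10, 9/10), (111111/250000, 1, 0, 873259/1000000, 81/100), (111111/250000, 941247/1000000, 118343/1250000, 403331/500000, 7/10), (99229/200000, 911087/1000000, 107117/1000000, 683119/1000000, 14/25), (253293/500000, 848401/1000000, 1257/10000, 110367/200000, 39/100), (525551/1000000, 78717/100000, 8243/62500, 1047/2500, 6/25), (539567/1000000, 362169/500000, 139119/1000000, 79799/250000, 13/100)]"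
  apply (rule chain_consI[OF s2_0])
  apply (rule chain_consI[OF s2_1])
  apply (rule chain_consI[OF s2_2])
  apply (rule chain_consI[OF s2_3])
  apply (rule chain_consI[OF s2_4])
  apply (rule chain_consI[OF s2_5])
  by (rule chain_single)

lemma num2: "\<exists>Bf \<rho> \<theta> J. (\<forall>x. cbx (0, 1, 0, 9/10, 9/10) x \<longrightarrow> cbx Bf ((psi 2 ^^ J) x)) \<and> cstep 2 Bf Bf \<and> ccond 2 Bf \<rho> \<theta>"
proof -
  have L: "last [(0, 1, 0, 9/10, 9/10), (111111/250000, 1, 0, 873259/1000000, 81/100), (111111/250000, 941247/1000000, 118343/1250000, 403331/500000, 7/10), (99229/200000, 911087/1000000, 107117/1000000, 683119/1000000, 14/25), (253293/500000, 848401/1000000, 1257/10000, 110367/200000, 39/100), (525551/1000000, 78717/100000, 8243/62500, 1047/2500, 6/25), (539567/1000000, 362169/500000, 139119/1000000, 79799/250000, 13/100)] = (539567/1000000, 362169/500000, 139119/1000000, 79799/250000, 13/100)" by simp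
  show ?thesis
    using chain_cbx[OF ch2] sf2 cc2 unfolding L by blast
qed

lemma s3_0: "cstep 3 (0, 1, 0, 9/10, 9/10) (37037/125000, 1, 0, 163209/200000, 73/100)"
  by (rule cstep_I[where qa="33333333/50000000" and qb="1" and qc="0" and qd="23362069/25000000" and qe="9/10" and qf="9/10"]) (simp_all add: power_divide)

lemma s3_1: "cstep 3 (37037/125000, 1, 0, 163209/200000, 73/100) (37037/125000, 450401/500000, 14927/1250000, 314089/500000, 9/20)"
  by (rule cstep_I[where qa="33333333/50000000" and qb="6036099/6250000" and qc="182857/800000" and qd="42821721/50000000" and qe="7656773/10000000" and qf="73/100"]) (simp_all add: power_divide)

lemma s3_2: "cstep 3 (37037/125000, 450401/500000, 14927/1250000, 314089/500000, 9/20) (63529/200000, 806497/1000000, 61369/5000000, 67963/200000, 17/100)"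
  by (rule cstep_I[where qa="34115439/50000000" and qb="46541193/50000000" and qc="11533557/50000000" and qd="34891323/50000000" and qe="27162251/50000000" and qf="9/20"]) (simp_all add: power_divide)

lemma s3_3: "cstep 3 (63529/200000, 806497/1000000, 61369/5000000, 67963/200000, 17/100) (10497/31250, 132503/200000, 144037/10000000, 159003/1000000, 1/40)"
  by (rule cstep_I[where qa="34756983/50000000" and qb="43588157/50000000" and qc="24330917/100000000" and qd="6771907/12500000" and qe="3643827/12500000" and qf="17/100"]) (simp_all add: power_divide)

lemma s3_4: "cstep 3 (10497/31250, 132503/200000, 144037/10000000, 159003/1000000, 1/40) (74387/200000, 143477/250000, 3283/200000, 827867/10000000, 7/2500)"
  by (rule cstep_I[where qa="7191553/10000000" and qb="83102471/100000000" and qc="25414449/100000000" and qd="5447913/12500000" and qe="7011201/50000000" and qf="1/40"]) (simp_all add: power_divide)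

lemma sf3: "cstep 3 (74387/200000, 143477/250000, 3283/200000, 827867/10000000, 7/2500) (74387/200000, 143477/250000, 3283/200000, 827867/10000000, 7/2500)"
  by (rule cstep_I[where qa="73718079/100000000" and qb="80437549/100000000" and qc="13716591/50000000" and qd="9583467/25000000" and qe="76655341/1000000000" and qf="7/2500"]) (simp_all add: power_divide)

lemma cc3: "ccond 3 (74387/200000, 143477/250000, 3283/200000, 827867/10000000, 7/2500) (19/50) (9/10)"
  by (rule ccond_I[where G="80437549/100000000" and Hb="9583467/25000000" and Hc="76655341/1000000000" and A="827867/10000000"]) (simp_all add: power_divide)

lemma ch3: "chain 3 [(0, 1, 0, 9/10, 9/10), (37037/125000, 1, 0, 163209/200000, 73/100), (37037/125000, 450401/500000, 14927/1250000, 314089/500000, 9/20), (63529/200000, 806497/1000000, 61369/5000000, 67963/200000, 17/100), (10497/31250, 132503/200000, 144037/10000000, 159003/1000000, 1/40), (74387/200000, 143477/250000, 3283/200000, 827867/10000000, 7/2500)]"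
  apply (rule chain_consI[OF s3_0])
  apply (rule chain_consI[OF s3_1])
  apply (rule chain_consI[OF s3_2])
  apply (rule chain_consI[OF s3_3])
  apply (rule chain_consI[OF s3_4])
  by (rule chain_single)

lemma num3: "\<exists>Bf \<rho> \<theta> J. (\<forall>x. cbx (0, 1, 0, 9/10, 9/10) x \<longrightarrow> cbx Bf ((psi 3 ^^ J) x)) \<and> cstep 3 Bf Bf \<and> ccond 3 Bf \<rho> \<theta>"
proof -
  have L: "last [(0, 1, 0, 9/10, 9/10), (37037/125000, 1, 0, 163209/200000, 73/100), (37037/125000, 450401/500000, 14927/1250000, 314089/500000, 9/20), (63529/200000, 806497/1000000, 61369/5000000, 67963/200000, 17/100), (10497/31250, 132503/200000, 144037/10000000, 159003/1000000, 1/40), (74387/200000, 143477/250000, 3283/200000, 827867/10000000, 7/2500)] = (74387/200000, 143477/250000, 3283/200000, 827867/10000000, 7/2500)" by simp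
  show ?thesis
    using chain_cbx[OF ch3] sf3 cc3 unfolding L by blast
qed

lemma s4_0: "cstep 4 (0, 1, 0, 9/10, 9/10) (19753/100000, 1, 0, 38129/50000, 33/50)"
  by (rule cstep_I[where qa="33333333/50000000" and qb="1" and qc="0" and qd="23362069/25000000" and qe="9/10" and qf="9/10"]) (simp_all add: power_divide)

lemma s4_1: "cstep 4 (19753/100000, 1, 0, 38129/50000, 33/50) (19753/100000, 872163/1000000, 92533/125000000, 18103/40000, 1/4)"
  by (rule cstep_I[where qa="33333333/50000000" and qb="12079789/12500000" and qc="3298957/20000000" and qd="20505133/25000000" and qe="35263577/50000000" and qf="33/50"]) (simp_all add: power_divide)

lemma s4_2: "cstep 4 (19753/100000, 872163/1000000, 92533/125000000, 18103/40000, 1/4) (43377/200000, 724177/1000000, 148419/200000000, 32921/250000, 21/1000)"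
  by (rule cstep_I[where qa="13648587/20000000" and qb="46124437/50000000" and qc="825249/5000000" and qd="30119827/50000000" and qe="9484537/25000000" and qf="1/4"]) (simp_all add: power_divide)

lemma s4_3: "cstep 4 (43377/200000, 724177/1000000, 148419/200000000, 32921/250000, 21/1000) (246247/1000000, 71169/125000, 101153/100000000, 207799/5000000, 1/5000)"
  by (rule cstep_I[where qa="70443833/100000000" and qb="21716267/25000000" and qc="17833833/100000000" and qd="22575551/50000000" and qe="2964157/25000000" and qf="21/1000"]) (simp_all add: power_divide)

lemma s4_4: "cstep 4 (246247/1000000, 71169/125000, 101153/100000000, 207799/5000000, 1/5000) (145173/500000, 62789/125000, 38231/25000000, 96021/5000000, 13/5000000)"
  by (rule cstep_I[where qa="18351393/25000000" and qb="84186669/100000000" and qc="19775119/100000000" and qd="4653277/12500000" and qe="7981833/200000000" and qf="1/5000"]) (simp_all add: power_divide)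

lemma sf4: "cstep 4 (145173/500000, 62789/125000, 38231/25000000, 96021/5000000, 13/5000000) (145173/500000, 62789/125000, 38231/25000000, 96021/5000000, 13/5000000)"
  by (rule cstep_I[where qa="18745163/25000000" and qb="5124029/6250000" and qc="352001/1562500" and qd="33860621/100000000" and qe="4710599/250000000" and qf="13/5000000"]) (simp_all add: power_divide)

lemma cc4: "ccond 4 (145173/500000, 62789/125000, 38231/25000000, 96021/5000000, 13/5000000) (11/100) (97/100)"
  by (rule ccond_I[where G="5124029/6250000" and Hb="33860621/100000000" and Hc="4710599/250000000" and A="96021/5000000"]) (simp_all add: power_divide)

lemma ch4: "chain 4 [(0, 1, 0, 9/10, 9/10), (19753/100000, 1, 0, 38129/50000, 33/50), (19753/100000, 872163/1000000, 92533/125000000, 18103/40000, 1/4), (43377/200000, 724177/1000000, 148419/200000000, 32921/250000, 21/1000), (246247/1000000, 71169/125000, 101153/100000000, 207799/5000000, 1/5000), (145173/500000, 62789/125000, 38231/25000000, 96021/5000000, 13/5000000)]"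
  apply (rule chain_consI[OF s4_0])
  apply (rule chain_consI[OF s4_1])
  apply (rule chain_consI[OF s4_2])
  apply (rule chain_consI[OF s4_3])
  apply (rule chain_consI[OF s4_4])
  by (rule chain_single)

lemma num4: "\<exists>Bf \<rho> \<theta> J. (\<forall>x. cbx (0, 1, 0, 9/10, 9/10) x \<longrightarrow> cbx Bf ((psi 4 ^^ J) x)) \<and> cstep 4 Bf Bf \<and> ccond 4 Bf \<rho> \<theta>"
proof -
  have L: "last [(0, 1, 0, 9/10, 9/10), (19753/100000, 1, 0, 38129/50000, 33/50), (19753/100000, 872163/1000000, 92533/125000000, 18103/40000, 1/4), (43377/200000, 724177/1000000, 148419/200000000, 32921/250000, 21/1000), (246247/1000000, 71169/125000, 101153/100000000, 207799/5000000, 1/5000), (145173/500000, 62789/125000, 38231/25000000, 96021/5000000, 13/5000000)] = (145173/500000, 62789/125000, 38231/25000000, 96021/5000000, 13/5000000)" by simp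
  show ?thesis
    using chain_cbx[OF ch4] sf4 cc4 unfolding L by blast
qed

lemma s5_0: "cstep 5 (0, 1, 0, 9/10, 9/10) (131687/1000000, 1, 0, 356309/500000, 3/5)"
  by (rule cstep_I[where qa="33333333/50000000" and qb="1" and qc="0" and qd="23362069/25000000" and qe="9/10" and qf="9/10"]) (simp_all add: power_divide)

lemma s5_1: "cstep 5 (131687/1000000, 1, 0, 356309/500000, 3/5) (131687/1000000, 858933/1000000, 42669/2000000000, 76429/250000, 3/25)"
  by (rule cstep_I[where qa="33333333/50000000" and qb="24251123/25000000" and qc="1454543/12500000" and qd="39448769/50000000" and qe="3263103/5000000" and qf="3/5"]) (simp_all add: power_divide)

lemma s5_2: "cstep 5 (131687/1000000, 858933/1000000, 42669/2000000000, 76429/250000, 3/25) (37423/250000, 171719/250000, 42673/2000000000, 474211/10000000, 3/2500)"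
  by (rule cstep_I[where qa="3419873/5000000" and qb="3710527/4000000" and qc="2909141/25000000" and qd="54349331/100000000" and qe="5166921/20000000" and qf="3/25"]) (simp_all add: power_divide)

lemma s5_3: "cstep 5 (37423/250000, 171719/250000, 42673/2000000000, 474211/10000000, 3/2500) (181241/1000000, 22369/40000, 187109/5000000000, 32071/2500000, 1/1000000)"
  by (rule cstep_I[where qa="71064317/100000000" and qb="44513037/50000000" and qc="1627553/12500000" and qd="5230511/12500000" and qe="22663041/500000000" and qf="3/2500"]) (simp_all add: power_divide)

lemma s5_4: "cstep 5 (181241/1000000, 22369/40000, 187109/5000000000, 32071/2500000, 1/1000000) (108007/500000, 494663/1000000, 212617/2500000000, 7727/1250000, 1/1000000)"
  by (rule cstep_I[where qa="73603149/100000000" and qb="4343419/5000000" and qc="3835939/25000000" and qd="7231861/20000000" and qe="1266593/100000000" and qf="1/1000000"]) (simp_all add: power_divide)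

lemma s5_5: "cstep 5 (108007/500000, 494663/1000000, 212617/2500000000, 7727/1250000, 1/1000000) (59867/250000, 88787/200000, 176957/1000000000, 405299/100000000, 1/1000000)"
  by (rule cstep_I[where qa="15027251/20000000" and qb="17001753/20000000" and qc="17765347/100000000" and qd="16615941/50000000" and qe="61436287/10000000000" and qf="1/1000000"]) (simp_all add: power_divide)

lemma s5_6: "cstep 5 (59867/250000, 88787/200000, 176957/1000000000, 405299/100000000, 1/1000000) (52363/200000, 207539/500000, 269383/1000000000, 278573/100000000, 1/1000000)"
  by (rule cstep_I[where qa="15297807/20000000" and qb="16774743/20000000" and qc="9661491/50000000" and qd="7707749/25000000" and qe="40366337/10000000000" and qf="1/1000000"]) (simp_all add: power_divide)

lemma s5_7: "cstep 5 (52363/200000, 207539/500000, 269383/1000000000, 278573/100000000, 1/1000000) (13823/50000, 195347/500000, 384997/1000000000, 27411/12500000, 1/1000000)"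
  by (rule cstep_I[where qa="15465237/20000000" and qb="20716059/25000000" and qc="20753509/100000000" and qd="5878043/20000000" and qe="27779941/10000000000" and qf="1/1000000"]) (simp_all add: power_divide)

lemma sf5: "cstep 5 (13823/50000, 195347/500000, 384997/1000000000, 27411/12500000, 1/1000000) (13823/50000, 195347/500000, 384997/1000000000, 27411/12500000, 1/1000000)"
  by (rule cstep_I[where qa="19519111/25000000" and qb="2569889/3125000" and qc="5416217/25000000" and qd="28137727/100000000" and qe="547021/250000000" and qf="1/1000000"]) (simp_all add: power_divide)

lemma cc5: "ccond 5 (13823/50000, 195347/500000, 384997/1000000000, 27411/12500000, 1/1000000) (29/1000) (97/100)"
  by (rule ccond_I[where G="2569889/3125000" and Hb="28137727/100000000" and Hc="547021/250000000" and A="27411/12500000"]) (simp_all add: power_divide)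

lemma ch5: "chain 5 [(0, 1, 0, 9/10, 9/10), (131687/1000000, 1, 0, 356309/500000, 3/5), (131687/1000000, 858933/1000000, 42669/2000000000, 76429/250000, 3/25), (37423/250000, 171719/250000, 42673/2000000000, 474211/10000000, 3/2500), (181241/1000000, 22369/40000, 187109/5000000000, 32071/2500000, 1/1000000), (108007/500000, 494663/1000000, 212617/2500000000, 7727/1250000, 1/1000000), (59867/250000, 88787/200000, 176957/1000000000, 405299/100000000, 1/1000000), (52363/200000, 207539/500000, 269383/1000000000, 278573/100000000, 1/1000000), (13823/50000, 195347/500000, 384997/1000000000, 27411/12500000, 1/1000000)]"
  apply (rule chain_consI[OF s5_0])
  apply (rule chain_consI[OF s5_1])
  apply (rule chain_consI[OF s5_2])
  apply (rule chain_consI[OF s5_3])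
  apply (rule chain_consI[OF s5_4])
  apply (rule chain_consI[OF s5_5])
  apply (rule chain_consI[OF s5_6])
  apply (rule chain_consI[OF s5_7])
  by (rule chain_single)

lemma num5: "\<exists>Bf \<rho> \<theta> J. (\<forall>x. cbx (0, 1, 0, 9/10, 9/10) x \<longrightarrow> cbx Bf ((psi 5 ^^ J) x)) \<and> cstep 5 Bf Bf \<and> ccond 5 Bf \<rho> \<theta>"
proof -
  have L: "last [(0, 1, 0, 9/10, 9/10), (131687/1000000, 1, 0, 356309/500000, 3/5), (131687/1000000, 858933/1000000, 42669/2000000000, 76429/250000, 3/25), (37423/250000, 171719/250000, 42673/2000000000, 474211/10000000, 3/2500), (181241/1000000, 22369/40000, 187109/5000000000, 32071/2500000, 1/1000000), (108007/500000, 494663/1000000, 212617/2500000000, 7727/1250000, 1/1000000), (59867/250000, 88787/200000, 176957/1000000000, 405299/100000000, 1/1000000), (52363/200000, 207539/500000, 269383/1000000000, 278573/100000000, 1/1000000), (13823/50000, 195347/500000, 384997/1000000000, 27411/12500000, 1/1000000)] = (13823/50000, 195347/500000, 384997/1000000000, 27411/12500000, 1/1000000)" by simp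
  show ?thesis
    using chain_cbx[OF ch5] sf5 cc5 unfolding L by blast
qed

lemma s6_0: "cstep 6 (0, 1, 0, 9/10, 9/10) (438957/5000000, 1, 0, 665929/1000000, 27/50)"
  by (rule cstep_I[where qa="33333333/50000000" and qb="1" and qc="0" and qd="23362069/25000000" and qe="9/10" and qf="9/10"]) (simp_all add: power_divide)

lemma s6_1: "cstep 6 (438957/5000000, 1, 0, 665929/1000000, 27/50) (438957/5000000, 859343/1000000, 17271/62500000000, 48093/250000, 6/125)"
  by (rule cstep_I[where qa="33333333/50000000" and qb="9750519/10000000" and qc="40353049/500000000" and qd="37989209/50000000" and qe="60217087/100000000" and qf="27/50"]) (simp_all add: power_divide)

lemma s6_2: "cstep 6 (438957/5000000, 859343/1000000, 17271/62500000000, 48093/250000, 6/125) (10233/100000, 344247/500000, 17271/62500000000, 175981/10000000, 23/1000000)"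
  by (rule cstep_I[where qa="34195623/50000000" and qb="11746089/12500000" and qc="80706119/1000000000" and qd="12750207/25000000" and qe="8407461/50000000" and qf="6/125"]) (simp_all add: power_divide)

lemma s6_3: "cstep 6 (10233/100000, 344247/500000, 17271/62500000000, 175981/10000000, 23/1000000) (128479/1000000, 592839/1000000, 639953/1000000000000, 488913/100000000, 1/1000000)"
  by (rule cstep_I[where qa="8879379/12500000" and qb="3666199/4000000" and qc="92830663/1000000000" and qd="20598797/50000000" and qe="8647077/500000000" and qf="23/1000000"]) (simp_all add: power_divide)

lemma s6_4: "cstep 6 (128479/1000000, 592839/1000000, 639953/1000000000000, 488913/100000000, 1/1000000) (149801/1000000, 131349/250000, 217787/100000000000, 135373/50000000, 1/1000000)"
  by (rule cstep_I[where qa="36438107/50000000" and qb="89828551/100000000" and qc="5692577/50000000" and qd="37333051/100000000" and qe="12163369/2500000000" and qf="1/1000000"]) (simp_all add: power_divide)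

lemma s6_5: "cstep 6 (149801/1000000, 131349/250000, 217787/100000000000, 135373/50000000, 1/1000000) (169343/1000000, 480611/1000000, 244527/50000000000, 27/16000, 1/1000000)"
  by (rule cstep_I[where qa="929761/1250000" and qb="44252263/50000000" and qc="13028453/100000000" and qd="34504331/100000000" and qe="13500761/5000000000" and qf="1/1000000"]) (simp_all add: power_divide)

lemma s6_6: "cstep 6 (169343/1000000, 480611/1000000, 244527/50000000000, 27/16000, 1/1000000) (37027/200000, 444853/1000000, 230623/25000000000, 14723/12500000, 1/1000000)"
  by (rule cstep_I[where qa="75494429/100000000" and qb="17474281/20000000" and qc="14481953/100000000" and qd="8124323/25000000" and qe="16846589/10000000000" and qf="1/1000000"]) (simp_all add: power_divide)

lemma s6_7: "cstep 6 (37027/200000, 444853/1000000, 230623/25000000000, 14723/12500000, 1/1000000) (99897/500000, 83807/200000, 72663/5000000000, 214003/250000000, 1/1000000)"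
  by (rule cstep_I[where qa="76459359/100000000" and qb="86505073/100000000" and qc="3905387/25000000" and qd="30813897/100000000" and qe="2941139/2500000000" and qf="1/1000000"]) (simp_all add: power_divide)

lemma s6_8: "cstep 6 (99897/500000, 83807/200000, 72663/5000000000, 214003/250000000, 1/1000000) (211737/1000000, 397201/1000000, 833/39062500, 665449/1000000000, 1/1000000)"
  by (rule cstep_I[where qa="77202777/100000000" and qb="85737019/100000000" and qc="208157/1250000" and qd="3693423/12500000" and qe="85528073/100000000000" and qf="1/1000000"]) (simp_all add: power_divide)

lemma s6_9: "cstep 6 (211737/1000000, 397201/1000000, 833/39062500, 665449/1000000000, 1/1000000) (222869/1000000, 76153/200000, 71173/2500000000, 264679/500000000, 1/1000000)"
  by (rule cstep_I[where qa="19466227/25000000" and qb="85135233/100000000" and qc="4368537/25000000" and qd="14220937/50000000" and qe="33250357/50000000000" and qf="1/1000000"]) (simp_all add: power_divide)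

lemma s6_10: "cstep 6 (222869/1000000, 76153/200000, 71173/2500000000, 264679/500000000, 1/1000000) (14497/62500, 366433/1000000, 45813/1250000000, 440781/1000000000, 1/1000000)"
  by (rule cstep_I[where qa="78385031/100000000" and qb="42296287/50000000" and qc="4556379/25000000" and qd="27586951/100000000" and qe="26453923/50000000000" and qf="1/1000000"]) (simp_all add: power_divide)

lemma s6_11: "cstep 6 (14497/62500, 366433/1000000, 45813/1250000000, 440781/1000000000, 1/1000000) (240417/1000000, 355389/1000000, 445557/10000000000, 372631/1000000000, 1/1000000)"
  by (rule cstep_I[where qa="19713677/25000000" and qb="8416223/10000000" and qc="9414283/50000000" and qd="13412703/50000000" and qe="11014681/25000000000" and qf="1/1000000"]) (simp_all add: power_divide)

lemma s6_12: "cstep 6 (240417/1000000, 355389/1000000, 445557/10000000000, 372631/1000000000, 1/1000000) (61829/250000, 345587/1000000, 530247/10000000000, 65101/200000000, 1/1000000)"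
  by (rule cstep_I[where qa="39613697/50000000" and qb="83770807/100000000" and qc="3876529/20000000" and qd="26227651/100000000" and qe="18624629/50000000000" and qf="1/1000000"]) (simp_all add: power_divide)

lemma s6_13: "cstep 6 (61829/250000, 345587/1000000, 530247/10000000000, 65101/200000000, 1/1000000) (63433/250000, 168963/500000, 303903/5000000000, 71853/250000000, 1/1000000)"
  by (rule cstep_I[where qa="9945793/12500000" and qb="83458437/100000000" and qc="19828697/100000000" and qd="5137841/20000000" and qe="32539941/100000000000" and qf="1/1000000"]) (simp_all add: power_divide)

lemma s6_14: "cstep 6 (63433/250000, 168963/500000, 303903/5000000000, 71853/250000000, 1/1000000) (258951/1000000, 165527/500000, 85913/1250000000, 51991/200000000, 1/1000000)"
  by (rule cstep_I[where qa="15967359/20000000" and qb="41586563/50000000" and qc="10119559/50000000" and qd="25262877/100000000" and qe="28732971/100000000000" and qf="1/1000000"]) (simp_all add: power_divide)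

lemma s6_15: "cstep 6 (258951/1000000, 165527/500000, 85913/1250000000, 51991/200000000, 1/1000000) (16487/62500, 65127/200000, 757521/10000000000, 236989/1000000000, 1/1000000)"
  by (rule cstep_I[where qa="1601673/2000000" and qb="41472319/50000000" and qc="20569913/100000000" and qd="12438213/50000000" and qe="25988771/100000000000" and qf="1/1000000"]) (simp_all add: power_divide)

lemma sf6: "cstep 6 (16487/62500, 65127/200000, 757521/10000000000, 236989/1000000000, 1/1000000) (16487/62500, 65127/200000, 757521/10000000000, 236989/1000000000, 1/1000000)"
  by (rule cstep_I[where qa="80281217/100000000" and qb="82735517/100000000" and qc="10437153/50000000" and qd="12284423/50000000" and qe="23693309/100000000000" and qf="1/1000000"]) (simp_all add: power_divide)

lemma cc6: "ccond 6 (16487/62500, 65127/200000, 757521/10000000000, 236989/1000000000, 1/1000000) (39/10000) (999/1000)"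
  by (rule ccond_I[where G="82735517/100000000" and Hb="12284423/50000000" and Hc="23693309/100000000000" and A="236989/1000000000"]) (simp_all add: power_divide)

lemma ch6: "chain 6 [(0, 1, 0, 9/10, 9/10), (438957/5000000, 1, 0, 665929/1000000, 27/50), (438957/5000000, 859343/1000000, 17271/62500000000, 48093/250000, 6/125), (10233/100000, 344247/500000, 17271/62500000000, 175981/10000000, 23/1000000), (128479/1000000, 592839/1000000, 639953/1000000000000, 488913/100000000, 1/1000000), (149801/1000000, 131349/250000, 217787/100000000000, 135373/50000000, 1/1000000), (169343/1000000, 480611/1000000, 244527/50000000000, 27/16000, 1/1000000), (37027/200000, 444853/1000000, 230623/25000000000, 14723/12500000, 1/1000000), (99897/500000, 83807/200000, 72663/5000000000, 214003/250000000, 1/1000000), (211737/1000000, 397201/1000000, 833/39062500, 665449/1000000000, 1/1000000), (222869/1000000, 76153/200000, 71173/2500000000, 264679/500000000, 1/1000000), (14497/62500, 366433/1000000, 45813/1250000000, 440781/1000000000, 1/1000000), (240417/1000000, 355389/1000000, 445557/10000000000, 372631/1000000000, 1/1000000), (61829/250000, 345587/1000000, 530247/10000000000, 65101/200000000, 1/1000000), (63433/250000, 168963/500000, 303903/5000000000, 71853/250000000, 1/1000000), (258951/1000000, 165527/500000, 85913/1250000000, 51991/200000000, 1/1000000), (16487/62500, 65127/200000, 757521/10000000000, 236989/1000000000, 1/1000000)]"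
  apply (rule chain_consI[OF s6_0])
  apply (rule chain_consI[OF s6_1])
  apply (rule chain_consI[OF s6_2])
  apply (rule chain_consI[OF s6_3])
  apply (rule chain_consI[OF s6_4])
  apply (rule chain_consI[OF s6_5])
  apply (rule chain_consI[OF s6_6])
  apply (rule chain_consI[OF s6_7])
  apply (rule chain_consI[OF s6_8])
  apply (rule chain_consI[OF s6_9])
  apply (rule chain_consI[OF s6_10])
  apply (rule chain_consI[OF s6_11])
  apply (rule chain_consI[OF s6_12])
  apply (rule chain_consI[OF s6_13])
  apply (rule chain_consI[OF s6_14])
  apply (rule chain_consI[OF s6_15])
  by (rule chain_single)

lemma num6: "\<exists>Bf \<rho> \<theta> J. (\<forall>x. cbx (0, 1, 0, 9/10, 9/10) x \<longrightarrow> cbx Bf ((psi 6 ^^ J) x)) \<and> cstep 6 Bf Bf \<and> ccond 6 Bf \<rho> \<theta>"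
proof -
  have L: "last [(0, 1, 0, 9/10, 9/10), (438957/5000000, 1, 0, 665929/1000000, 27/50), (438957/5000000, 859343/1000000, 17271/62500000000, 48093/250000, 6/125), (10233/100000, 344247/500000, 17271/62500000000, 175981/10000000, 23/1000000), (128479/1000000, 592839/1000000, 639953/1000000000000, 488913/100000000, 1/1000000), (149801/1000000, 131349/250000, 217787/100000000000, 135373/50000000, 1/1000000), (169343/1000000, 480611/1000000, 244527/50000000000, 27/16000, 1/1000000), (37027/200000, 444853/1000000, 230623/25000000000, 14723/12500000, 1/1000000), (99897/500000, 83807/200000, 72663/5000000000, 214003/250000000, 1/1000000), (211737/1000000, 397201/1000000, 833/39062500, 665449/1000000000, 1/1000000), (222869/1000000, 76153/200000, 71173/2500000000, 264679/500000000, 1/1000000), (14497/62500, 366433/1000000, 45813/1250000000, 440781/1000000000, 1/1000000), (240417/1000000, 355389/1000000, 445557/10000000000, 372631/1000000000, 1/1000000), (61829/250000, 345587/1000000, 530247/10000000000, 65101/200000000, 1/1000000), (63433/250000, 168963/500000, 303903/5000000000, 71853/250000000, 1/1000000), (258951/1000000, 165527/500000, 85913/1250000000, 51991/200000000, 1/1000000), (16487/62500, 65127/200000, 757521/10000000000, 236989/1000000000, 1/1000000)] = (16487/62500, 65127/200000, 757521/10000000000, 236989/1000000000, 1/1000000)" by simp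
  show ?thesis
    using chain_cbx[OF ch6] sf6 cc6 unfolding L by blast
qed

lemma s7_0: "cstep 7 (0, 1, 0, 9/10, 9/10) (146319/2500000, 1, 0, 622299/1000000, 12/25)"
  by (rule cstep_I[where qa="33333333/50000000" and qb="1" and qc="0" and qd="23362069/25000000" and qe="9/10" and qf="9/10"]) (simp_all add: power_divide)

lemma s7_1: "cstep 7 (146319/2500000, 1, 0, 622299/1000000, 12/25) (146319/2500000, 108679/125000, 78991/50000000000000, 5661/50000, 17/1000)"
  by (rule cstep_I[where qa="33333333/50000000" and qb="98021053/100000000" and qc="86393/1562500" and qd="36628213/50000000" and qe="55407539/100000000" and qf="12/25"]) (simp_all add: power_divide)

lemma s7_2: "cstep 7 (146319/2500000, 108679/125000, 78991/50000000000000, 5661/50000, 17/1000) (690199/10000000, 143349/200000, 78991/50000000000000, 140937/20000000, 1/1000000)"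
  by (rule cstep_I[where qa="266624/390625" and qb="95353757/100000000" and qc="86393/1562500" and qd="985373/2000000" and qe="10328477/100000000" and qf="17/1000"]) (simp_all add: power_divide)

lemma s7_3: "cstep 7 (690199/10000000, 143349/200000, 78991/50000000000000, 140937/20000000, 1/1000000) (217407/2500000, 647413/1000000, 7307/1562500000000, 9101/4000000, 1/1000000)"
  by (rule cstep_I[where qa="35273311/50000000" and qb="93977933/100000000" and qc="32281859/500000000" and qd="2620069/6250000" and qe="8746933/1250000000" and qf="1/1000000"]) (simp_all add: power_divide)

lemma s7_4: "cstep 7 (217407/2500000, 647413/1000000, 7307/1562500000000, 9101/4000000, 1/1000000) (491291/5000000, 116843/200000, 52453/2500000000000, 73083/50000000, 1/1000000)"
  by (rule cstep_I[where qa="4486759/6250000" and qb="2894031/3125000" and qc="40002657/500000000" and qd="7870599/20000000" and qe="22700873/10000000000" and qf="1/1000000"]) (simp_all add: power_divide)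

lemma s7_5: "cstep 7 (491291/5000000, 116843/200000, 52453/2500000000000, 73083/50000000, 1/1000000) (111091/1000000, 137353/250000, 114707/2500000000000, 116687/125000000, 1/1000000)"
  by (rule cstep_I[where qa="73058157/100000000" and qb="91799981/100000000" and qc="17893461/200000000" and qd="36911261/100000000" and qe="7297641/5000000000" and qf="1/1000000"]) (simp_all add: power_divide)

lemma s7_6: "cstep 7 (111091/1000000, 137353/250000, 114707/2500000000000, 116687/125000000, 1/1000000) (119491/1000000, 513547/1000000, 49943/500000000000, 707863/1000000000, 1/1000000)"
  by (rule cstep_I[where qa="14764573/20000000" and qb="90918923/100000000" and qc="99983713/1000000000" and qd="4435093/12500000" and qe="93262633/100000000000" and qf="1/1000000"]) (simp_all add: power_divide)

lemma s7_7: "cstep 7 (119491/1000000, 513547/1000000, 49943/500000000000, 707863/1000000000, 1/1000000) (4043/31250, 122987/250000, 78917/500000000000, 129853/250000000, 1/1000000)"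
  by (rule cstep_I[where qa="37332927/50000000" and qb="90362539/100000000" and qc="10673691/100000000" and qd="33945899/100000000" and qe="707363/1000000000" and qf="1/1000000"]) (simp_all add: power_divide)

lemma s7_8: "cstep 7 (4043/31250, 122987/250000, 78917/500000000000, 129853/250000000, 1/1000000) (4251/31250, 234121/500000, 64721/250000000000, 3319/7812500, 1/1000000)"
  by (rule cstep_I[where qa="75202937/100000000" and qb="44863611/50000000" and qc="11455531/100000000" and qd="32985013/100000000" and qe="3244643/6250000000" and qf="1/1000000"]) (simp_all add: power_divide)

lemma s7_9: "cstep 7 (4251/31250, 234121/500000, 64721/250000000000, 3319/7812500, 1/1000000) (144041/1000000, 226619/500000, 352983/1000000000000, 336193/1000000000, 1/1000000)"
  by (rule cstep_I[where qa="75819997/100000000" and qb="44655371/50000000" and qc="11974313/100000000" and qd="7975141/25000000" and qe="21232601/50000000000" and qf="1/1000000"]) (simp_all add: power_divide)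

lemma s7_10: "cstep 7 (144041/1000000, 226619/500000, 352983/1000000000000, 336193/1000000000, 1/1000000) (149533/1000000, 43613/100000, 125387/250000000000, 57499/200000000, 1/1000000)"
  by (rule cstep_I[where qa="76226407/100000000" and qb="22205291/25000000" and qc="12590549/100000000" and qd="15597681/50000000" and qe="6721607/20000000000" and qf="1/1000000"]) (simp_all add: power_divide)

lemma s7_11: "cstep 7 (149533/1000000, 43613/100000, 125387/250000000000, 57499/200000000, 1/1000000) (1953/12500, 212479/500000, 315123/500000000000, 119271/500000000, 1/1000000)"
  by (rule cstep_I[where qa="9588213/12500000" and qb="88492501/100000000" and qc="13008157/100000000" and qd="60749/200000" and qe="14370633/50000000000" and qf="1/1000000"]) (simp_all add: power_divide)

lemma s7_12: "cstep 7 (1953/12500, 212479/500000, 315123/500000000000, 119271/500000000, 1/1000000) (80449/500000, 205947/500000, 411321/500000000000, 1641/7812500, 1/1000000)"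
  by (rule cstep_I[where qa="19257067/25000000" and qb="88098659/100000000" and qc="3378193/25000000" and qd="14913743/50000000" and qe="4769707/20000000000" and qf="1/1000000"]) (simp_all add: power_divide)

lemma s7_13: "cstep 7 (80449/500000, 205947/500000, 411321/500000000000, 1641/7812500, 1/1000000) (33329/200000, 201589/500000, 491211/500000000000, 180027/1000000000, 1/1000000)"
  by (rule cstep_I[where qa="15483097/20000000" and qb="87829877/100000000" and qc="13859797/100000000" and qd="14588747/50000000" and qe="2100041/10000000000" and qf="1/1000000"]) (simp_all add: power_divide)

lemma s7_14: "cstep 7 (33329/200000, 201589/500000, 491211/500000000000, 180027/1000000000, 1/1000000) (170673/1000000, 78561/200000, 30333/25000000000, 80919/500000000, 1/1000000)"
  by (rule cstep_I[where qa="38840029/50000000" and qb="87503469/100000000" and qc="7142067/50000000" and qd="28736891/100000000" and qe="8999739/50000000000" and qf="1/1000000"]) (simp_all add: power_divide)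

lemma s7_15: "cstep 7 (170673/1000000, 78561/200000, 30333/25000000000, 80919/500000000, 1/1000000) (175681/1000000, 385777/1000000, 139993/100000000000, 17753/125000000, 1/1000000)"
  by (rule cstep_I[where qa="78001661/100000000" and qb="1745561/2000000" and qc="1822383/12500000" and qd="14102859/50000000" and qe="8090599/50000000000" and qf="1/1000000"]) (simp_all add: power_divide)

lemma s7_16: "cstep 7 (175681/1000000, 385777/1000000, 139993/100000000000, 17753/125000000, 1/1000000) (89607/500000, 188651/500000, 4159/2500000000, 64831/500000000, 1/1000000)"
  by (rule cstep_I[where qa="39111919/50000000" and qb="17400311/20000000" and qc="14942931/100000000" and qd="27841171/100000000" and qe="7100199/50000000000" and qf="1/1000000"]) (simp_all add: power_divide)

lemma s7_17: "cstep 7 (89607/500000, 188651/500000, 4159/2500000000, 64831/500000000, 1/1000000) (183633/1000000, 74299/200000, 93633/50000000000, 115853/1000000000, 1/1000000)"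
  by (rule cstep_I[where qa="39248247/50000000" and qb="43404481/50000000" and qc="15197771/100000000" and qd="13698431/50000000" and qe="3241133/25000000000" and qf="1/1000000"]) (simp_all add: power_divide)

lemma s7_18: "cstep 7 (183633/1000000, 74299/200000, 93633/50000000000, 115853/1000000000, 1/1000000) (37353/200000, 364421/1000000, 216341/100000000000, 53523/500000000, 1/1000000)"
  by (rule cstep_I[where qa="78686377/100000000" and qb="17314177/20000000" and qc="15514377/100000000" and qd="13544577/50000000" and qe="1158397/10000000000" and qf="1/1000000"]) (simp_all add: power_divide)

lemma s7_19: "cstep 7 (37353/200000, 364421/1000000, 216341/100000000000, 53523/500000000, 1/1000000) (190701/1000000, 89883/250000, 239067/100000000000, 242529/2500000000, 1/1000000)"
  by (rule cstep_I[where qa="39460569/50000000" and qb="8640401/10000000" and qc="3934337/25000000" and qd="13355467/50000000" and qe="2140693/20000000000" and qf="1/1000000"]) (simp_all add: power_divide)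

lemma s7_20: "cstep 7 (190701/1000000, 89883/250000, 239067/100000000000, 242529/2500000000, 1/1000000) (193501/1000000, 35353/100000, 270307/100000000000, 905011/10000000000, 1/1000000)"
  by (rule cstep_I[where qa="15817129/20000000" and qb="21549113/25000000" and qc="16015891/100000000" and qd="6611791/25000000" and qe="97002287/1000000000000" and qf="1/1000000"]) (simp_all add: power_divide)

lemma s7_21: "cstep 7 (193501/1000000, 35353/100000, 270307/100000000000, 905011/10000000000, 1/1000000) (197031/1000000, 174677/500000, 147231/50000000000, 829683/10000000000, 1/1000000)"
  by (rule cstep_I[where qa="3964509/5000000" and qb="43025119/50000000" and qc="8106463/50000000" and qd="13060429/50000000" and qe="90493001/1000000000000" and qf="1/1000000"]) (simp_all add: power_divide)

lemma s7_22: "cstep 7 (197031/1000000, 174677/500000, 147231/50000000000, 829683/10000000000, 1/1000000) (3991/20000, 86049/250000, 327349/100000000000, 24379/312500000, 1/1000000)"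
  by (rule cstep_I[where qa="15886839/20000000" and qb="1341681/1562500" and qc="3292003/20000000" and qd="3236507/12500000" and qe="165923/2000000000" and qf="1/1000000"]) (simp_all add: power_divide)

lemma s7_23: "cstep 7 (3991/20000, 86049/250000, 327349/100000000000, 24379/312500000, 1/1000000) (101367/500000, 170293/500000, 352567/100000000000, 72207/1000000000, 1/1000000)"
  by (rule cstep_I[where qa="39807021/50000000" and qb="85738373/100000000" and qc="332709/2000000" and qd="12803787/50000000" and qe="78006793/1000000000000" and qf="1/1000000"]) (simp_all add: power_divide)

lemma s7_24: "cstep 7 (101367/500000, 170293/500000, 352567/100000000000, 72207/1000000000, 1/1000000) (51253/250000, 336107/1000000, 4833/1250000000, 341711/5000000000, 1/1000000)"
  by (rule cstep_I[where qa="19935307/25000000" and qb="85576381/100000000" and qc="3371229/20000000" and qd="6351781/25000000" and qe="72201859/1000000000000" and qf="1/1000000"]) (simp_all add: power_divide)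

lemma s7_25: "cstep 7 (51253/250000, 336107/1000000, 4833/1250000000, 341711/5000000000, 1/1000000) (207897/1000000, 166479/500000, 103149/25000000000, 637691/10000000000, 1/1000000)"
  by (rule cstep_I[where qa="19975139/25000000" and qb="85461383/100000000" and qc="17013329/100000000" and qd="12578491/50000000" and qe="34168799/500000000000" and qf="1/1000000"]) (simp_all add: power_divide)

lemma s7_26: "cstep 7 (207897/1000000, 166479/500000, 103149/25000000000, 637691/10000000000, 1/1000000) (52491/250000, 82259/250000, 447443/100000000000, 121391/2000000000, 1/1000000)"
  by (rule cstep_I[where qa="100017/125000" and qb="85316809/100000000" and qc="8605771/50000000" and qd="24980077/100000000" and qe="31882549/500000000000" and qf="1/1000000"]) (simp_all add: power_divide)

lemma s7_27: "cstep 7 (52491/250000, 82259/250000, 447443/100000000000, 121391/2000000000, 1/1000000) (212587/1000000, 326269/1000000, 14807/3125000000, 570277/10000000000, 1/1000000)"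
  by (rule cstep_I[where qa="40077797/50000000" and qb="85213951/100000000" and qc="17352977/100000000" and qd="198069/800000" and qe="60691877/1000000000000" and qf="1/1000000"]) (simp_all add: power_divide)

lemma s7_28: "cstep 7 (212587/1000000, 326269/1000000, 14807/3125000000, 570277/10000000000, 1/1000000) (214469/1000000, 322809/1000000, 509071/100000000000, 68179/1250000000, 1/1000000)"
  by (rule cstep_I[where qa="80256583/100000000" and qb="85084287/100000000" and qc="17531759/100000000" and qd="24601573/100000000" and qe="28512253/500000000000" and qf="1/1000000"]) (simp_all add: power_divide)

lemma s7_29: "cstep 7 (214469/1000000, 322809/1000000, 509071/100000000000, 68179/1250000000, 1/1000000) (10843/50000, 160181/500000, 535623/100000000000, 515543/10000000000, 1/1000000)"
  by (rule cstep_I[where qa="80383821/100000000" and qb="531199/625000" and qc="17659561/100000000" and qd="24404303/100000000" and qe="1363507/25000000000" and qf="1/1000000"]) (simp_all add: power_divide)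

lemma s7_30: "cstep 7 (10843/50000, 160181/500000, 535623/100000000000, 515543/10000000000, 1/1000000) (218577/1000000, 158647/500000, 570933/100000000000, 495171/10000000000, 1/1000000)"
  by (rule cstep_I[where qa="10059307/12500000" and qb="84875093/100000000" and qc="4455339/25000000" and qd="12132071/50000000" and qe="25775847/500000000000" and qf="1/1000000"]) (simp_all add: power_divide)

lemma s7_31: "cstep 7 (218577/1000000, 158647/500000, 570933/100000000000, 495171/10000000000, 1/1000000) (110381/500000, 3939/12500, 149353/25000000000, 47051/1000000000, 1/1000000)"
  by (rule cstep_I[where qa="40294429/50000000" and qb="10598967/12500000" and qc="17937153/100000000" and qd="6021927/25000000" and qe="24757349/500000000000" and qf="1/1000000"]) (simp_all add: power_divide)

lemma s7_32: "cstep 7 (110381/500000, 3939/12500, 149353/25000000000, 47051/1000000000, 1/1000000) (222331/1000000, 62477/200000, 63251/10000000000, 453611/10000000000, 1/1000000)"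
  by (rule cstep_I[where qa="40335223/50000000" and qb="42343117/50000000" and qc="18084039/100000000" and qd="23962169/100000000" and qe="23524417/500000000000" and qf="1/1000000"]) (simp_all add: power_divide)

lemma s7_33: "cstep 7 (222331/1000000, 62477/200000, 63251/10000000000, 453611/10000000000, 1/1000000) (224331/1000000, 77611/250000, 658709/100000000000, 21651/500000000, 1/1000000)"
  by (rule cstep_I[where qa="20193427/25000000" and qb="8461087/10000000" and qc="18189193/100000000" and qd="23803671/100000000" and qe="2834943/62500000000" and qf="1/1000000"]) (simp_all add: power_divide)

lemma s7_34: "cstep 7 (224331/1000000, 77611/250000, 658709/100000000000, 21651/500000000, 1/1000000) (28221/125000, 153999/500000, 21667/3125000000, 209423/5000000000, 1/1000000)"
  by (rule cstep_I[where qa="40423707/50000000" and qb="42257639/50000000" and qc="18322839/100000000" and qd="23690769/100000000" and qe="43300169/1000000000000" and qf="1/1000000"]) (simp_all add: power_divide)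

lemma s7_35: "cstep 7 (28221/125000, 153999/500000, 21667/3125000000, 209423/5000000000, 1/1000000) (569/2500, 153129/500000, 71911/10000000000, 200749/5000000000, 1/1000000)"
  by (rule cstep_I[where qa="40470401/50000000" and qb="84446921/100000000" and qc="18418597/100000000" and qd="11774019/50000000" and qe="5235361/125000000000" and qf="1/1000000"]) (simp_all add: power_divide)

lemma s7_36: "cstep 7 (569/2500, 153129/500000, 71911/10000000000, 200749/5000000000, 1/1000000) (228917/1000000, 152031/500000, 188263/25000000000, 48687/1250000000, 1/1000000)"
  by (rule cstep_I[where qa="4050379/5000000" and qb="84360167/100000000" and qc="18540349/100000000" and qd="11723083/50000000" and qe="40148229/1000000000000" and qf="1/1000000"]) (simp_all add: power_divide)

lemma s7_37: "cstep 7 (228917/1000000, 152031/500000, 188263/25000000000, 48687/1250000000, 1/1000000) (115299/500000, 302499/1000000, 194557/25000000000, 93687/2500000000, 1/1000000)"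
  by (rule cstep_I[where qa="5068267/6250000" and qb="8429807/10000000" and qc="18627653/100000000" and qd="11658613/50000000" and qe="19474061/500000000000" and qf="1/1000000"]) (simp_all add: power_divide)

lemma s7_38: "cstep 7 (115299/500000, 302499/1000000, 194557/25000000000, 93687/2500000000, 1/1000000) (115903/500000, 150261/500000, 202831/25000000000, 182257/5000000000, 1/1000000)"
  by (rule cstep_I[where qa="81152833/100000000" and qb="328981/390625" and qc="18738813/100000000" and qd="11612589/50000000" and qe="18736717/500000000000" and qf="1/1000000"]) (simp_all add: power_divide)

lemma s7_39: "cstep 7 (115903/500000, 150261/500000, 202831/25000000000, 182257/5000000000, 1/1000000) (233349/1000000, 149557/500000, 208947/25000000000, 351881/10000000000, 1/1000000)"
  by (rule cstep_I[where qa="40614887/50000000" and qb="84162637/100000000" and qc="18818509/100000000" and qd="11554223/50000000" and qe="9112527/250000000000" and qf="1/1000000"]) (simp_all add: power_divide)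

lemma s7_40: "cstep 7 (233349/1000000, 149557/500000, 208947/25000000000, 351881/10000000000, 1/1000000) (117229/500000, 297329/1000000, 867881/100000000000, 343091/10000000000, 1/1000000)"
  by (rule cstep_I[where qa="20321201/25000000" and qb="84090741/100000000" and qc="18920077/100000000" and qd="4605017/20000000" and qe="17593449/500000000000" and qf="1/1000000"]) (simp_all add: power_divide)

lemma s7_41: "cstep 7 (117229/500000, 297329/1000000, 867881/100000000000, 343091/10000000000, 1/1000000) (58969/250000, 296057/1000000, 891543/100000000000, 166097/5000000000, 1/1000000)"
  by (rule cstep_I[where qa="81354847/100000000" and qb="42019627/50000000" and qc="9496461/50000000" and qd="22919157/100000000" and qe="17153979/500000000000" and qf="1/1000000"]) (simp_all add: power_divide)

lemma s7_42: "cstep 7 (58969/250000, 296057/1000000, 891543/100000000000, 166097/5000000000, 1/1000000) (118447/500000, 294443/1000000, 922537/100000000000, 20287/625000000, 1/1000000)"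
  by (rule cstep_I[where qa="10175619/12500000" and qb="5248353/6250000" and qc="19085871/100000000" and qd="11421743/50000000" and qe="3321833/100000000000" and qf="1/1000000"]) (simp_all add: power_divide)

lemma s7_43: "cstep 7 (118447/500000, 294443/1000000, 922537/100000000000, 20287/625000000, 1/1000000) (238197/1000000, 293293/1000000, 236327/25000000000, 315141/10000000000, 1/1000000)"
  by (rule cstep_I[where qa="81468759/100000000" and qb="5245419/6250000" and qc="19152471/100000000" and qd="11373633/50000000" and qe="32458179/1000000000000" and qf="1/1000000"]) (simp_all add: power_divide)

lemma s7_44: "cstep 7 (238197/1000000, 293293/1000000, 236327/25000000000, 315141/10000000000, 1/1000000) (239133/1000000, 291831/1000000, 975099/100000000000, 154269/5000000000, 1/1000000)"
  by (rule cstep_I[where qa="81514381/100000000" and qb="10483351/12500000" and qc="9618777/50000000" and qd="11339277/50000000" and qe="31513139/1000000000000" and qf="1/1000000"]) (simp_all add: power_divide)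

lemma s7_45: "cstep 7 (239133/1000000, 291831/1000000, 975099/100000000000, 154269/5000000000, 1/1000000) (24033/100000, 72697/250000, 996953/100000000000, 300299/10000000000, 1/1000000)"
  by (rule cstep_I[where qa="81572573/100000000" and qb="10477989/12500000" and qc="4824641/25000000" and qd="11295517/50000000" and qe="30852879/1000000000000" and qf="1/1000000"]) (simp_all add: power_divide)

lemma s7_46: "cstep 7 (24033/100000, 72697/250000, 996953/100000000000, 300299/10000000000, 1/1000000) (24119/100000, 144731/500000, 51273/5000000000, 11781/400000000, 1/1000000)"
  by (rule cstep_I[where qa="40807109/50000000" and qb="83769213/100000000" and qc="387529/2000000" and qd="22528469/100000000" and qe="30029029/1000000000000" and qf="1/1000000"]) (simp_all add: power_divide)

lemma s7_47: "cstep 7 (24119/100000, 144731/500000, 51273/5000000000, 11781/400000000, 1/1000000) (242291/1000000, 72129/250000, 104633/10000000000, 28731/1000000000, 1/1000000)"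
  by (rule cstep_I[where qa="81667323/100000000" and qb="83730023/100000000" and qc="9716159/50000000" and qd="2244879/10000000" and qe="29451663/1000000000000" and qf="1/1000000"]) (simp_all add: power_divide)

lemma s7_48: "cstep 7 (242291/1000000, 72129/250000, 104633/10000000000, 28731/1000000000, 1/1000000) (243081/1000000, 287311/1000000, 21471/2000000000, 282247/10000000000, 1/1000000)"
  by (rule cstep_I[where qa="40852659/50000000" and qb="83679983/100000000" and qc="9751863/50000000" and qd="139949/625000" and qe="7182551/250000000000" and qf="1/1000000"]) (simp_all add: power_divide)

lemma s7_49: "cstep 7 (243081/1000000, 287311/1000000, 21471/2000000000, 282247/10000000000, 1/1000000) (122047/500000, 286451/1000000, 54671/5000000000, 137949/5000000000, 1/1000000)"
  by (rule cstep_I[where qa="10219231/12500000" and qb="8364417/10000000" and qc="2444361/12500000" and qd="1394949/6250000" and qe="7055983/250000000000" and qf="1/1000000"]) (simp_all add: power_divide)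

lemma s7_50: "cstep 7 (122047/500000, 286451/1000000, 54671/5000000000, 137949/5000000000, 1/1000000) (12241/50000, 57071/200000, 111931/10000000000, 54287/2000000000, 1/1000000)"
  by (rule cstep_I[where qa="3271543/4000000" and qb="83598359/100000000" and qc="9810197/50000000" and qd="22267241/100000000" and qe="27589067/1000000000000" and qf="1/1000000"]) (simp_all add: power_divide)

lemma s7_51: "cstep 7 (12241/50000, 57071/200000, 111931/10000000000, 54287/2000000000, 1/1000000) (30719/125000, 284573/1000000, 113817/10000000000, 265829/10000000000, 1/1000000)"
  by (rule cstep_I[where qa="81832941/100000000" and qb="83565603/100000000" and qc="19667277/100000000" and qd="22200951/100000000" and qe="27142791/1000000000000" and qf="1/1000000"]) (simp_all add: power_divide)

lemma s7_52: "cstep 7 (30719/125000, 284573/1000000, 113817/10000000000, 265829/10000000000, 1/1000000) (246419/1000000, 141787/500000, 58137/5000000000, 261883/10000000000, 1/1000000)"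
  by (rule cstep_I[where qa="2558271/3125000" and qb="83523647/100000000" and qc="19727381/100000000" and qd="22153579/100000000" and qe="1329111/50000000000" and qf="1/1000000"]) (simp_all add: power_divide)

lemma s7_53: "cstep 7 (246419/1000000, 141787/500000, 58137/5000000000, 261883/10000000000, 1/1000000) (247277/1000000, 282863/1000000, 118059/10000000000, 25691/1000000000, 1/1000000)"
  by (rule cstep_I[where qa="81905301/100000000" and qb="16698737/20000000" and qc="19770341/100000000" and qd="2761623/12500000" and qe="26187641/1000000000000" and qf="1/1000000"]) (simp_all add: power_divide)

lemma s7_54: "cstep 7 (247277/1000000, 282863/1000000, 118059/10000000000, 25691/1000000000, 1/1000000) (24789/100000, 8811/31250, 24077/2000000000, 50683/2000000000, 1/1000000)"
  by (rule cstep_I[where qa="2048357/2500000" and qb="41727611/50000000" and qc="3965107/20000000" and qd="5512449/25000000" and qe="12845183/500000000000" and qf="1/1000000"]) (simp_all add: power_divide)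

lemma s7_55: "cstep 7 (24789/100000, 8811/31250, 24077/2000000000, 50683/2000000000, 1/1000000) (248679/1000000, 35163/125000, 122069/10000000000, 7781/312500000, 1/1000000)"
  by (rule cstep_I[where qa="2561609/3125000" and qb="20856949/25000000" and qc="19864923/100000000" and qd="10997197/50000000" and qe="6335221/250000000000" and qf="1/1000000"]) (simp_all add: power_divide)

lemma s7_56: "cstep 7 (248679/1000000, 35163/125000, 122069/10000000000, 7781/312500000, 1/1000000) (249243/1000000, 140237/500000, 15533/1250000000, 122941/5000000000, 1/1000000)"
  by (rule cstep_I[where qa="10249751/12500000" and qb="41696281/50000000" and qc="19915561/100000000" and qd="2744367/12500000" and qe="4979721/200000000000" and qf="1/1000000"]) (simp_all add: power_divide)

lemma s7_57: "cstep 7 (249243/1000000, 140237/500000, 15533/1250000000, 122941/5000000000, 1/1000000) (15623/62500, 139941/500000, 31463/2500000000, 241943/10000000000, 1/1000000)"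
  by (rule cstep_I[where qa="82032039/100000000" and qb="83367421/100000000" and qc="19951721/100000000" and qd="21904341/100000000" and qe="24587621/1000000000000" and qf="1/1000000"]) (simp_all add: power_divide)

lemma s7_58: "cstep 7 (15623/62500, 139941/500000, 31463/2500000000, 241943/10000000000, 1/1000000) (250487/1000000, 2233/8000, 127917/10000000000, 239163/10000000000, 1/1000000)"
  by (rule cstep_I[where qa="82056357/100000000" and qb="83335159/100000000" and qc="19998153/100000000" and qd="21868211/100000000" and qe="24193739/1000000000000" and qf="1/1000000"]) (simp_all add: power_divide)

lemma s7_59: "cstep 7 (250487/1000000, 2233/8000, 127917/10000000000, 239163/10000000000, 1/1000000) (251153/1000000, 55717/200000, 129411/10000000000, 47129/2000000000, 1/1000000)"
  by (rule cstep_I[where qa="41043753/50000000" and qb="83312103/100000000" and qc="31299/156250" and qd="10910983/50000000" and qe="2989469/125000000000" and qf="1/1000000"]) (simp_all add: power_divide)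

lemma s7_60: "cstep 7 (251153/1000000, 55717/200000, 129411/10000000000, 47129/2000000000, 1/1000000) (25163/100000, 138947/500000, 131349/10000000000, 5829/250000000, 1/1000000)"
  by (rule cstep_I[where qa="82109763/100000000" and qb="41641281/50000000" and qc="20073931/100000000" and qd="10894471/50000000" and qe="23563969/1000000000000" and qf="1/1000000"]) (simp_all add: power_divide)

lemma s7_61: "cstep 7 (25163/100000, 138947/500000, 131349/10000000000, 5829/250000000, 1/1000000) (252243/1000000, 277401/1000000, 531/40000000, 23001/1000000000, 1/1000000)"
  by (rule cstep_I[where qa="82138289/100000000" and qb="83261437/100000000" and qc="4020879/20000000" and qd="4349329/20000000" and qe="582887/25000000000" and qf="1/1000000"]) (simp_all add: power_divide)

lemma s7_62: "cstep 7 (252243/1000000, 277401/1000000, 531/40000000, 23001/1000000000, 1/1000000) (252681/1000000, 276769/1000000, 134569/10000000000, 227783/10000000000, 1/1000000)"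
  by (rule cstep_I[where qa="5134917/6250000" and qb="10404291/12500000" and qc="5035877/25000000" and qd="10858219/50000000" and qe="11500247/500000000000" and qf="1/1000000"]) (simp_all add: power_divide)

lemma s7_63: "cstep 7 (252681/1000000, 276769/1000000, 134569/10000000000, 227783/10000000000, 1/1000000) (50649/200000, 1727/6250, 3397/250000000, 224953/10000000000, 1/1000000)"
  by (rule cstep_I[where qa="2054621/2500000" and qb="16642997/20000000" and qc="20171433/100000000" and qd="5419421/25000000" and qe="5694451/250000000000" and qf="1/1000000"]) (simp_all add: power_divide)

lemma s7_64: "cstep 7 (50649/200000, 1727/6250, 3397/250000000, 224953/10000000000, 1/1000000) (253647/1000000, 137871/500000, 137583/10000000000, 111479/5000000000, 1/1000000)"
  by (rule cstep_I[where qa="1284429/1562500" and qb="83190111/100000000" and qc="20207361/100000000" and qd="173201/800000" and qe="22494817/1000000000000" and qf="1/1000000"]) (simp_all add: power_divide)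

lemma s7_65: "cstep 7 (253647/1000000, 137871/500000, 137583/10000000000, 111479/5000000000, 1/1000000) (127083/500000, 275331/1000000, 17351/1250000000, 55103/2500000000, 1/1000000)"
  by (rule cstep_I[where qa="41113727/50000000" and qb="16634481/20000000" and qc="20232951/100000000" and qd="21614623/100000000" and qe="11147663/500000000000" and qf="1/1000000"]) (simp_all add: power_divide)

lemma s7_66: "cstep 7 (127083/500000, 275331/1000000, 17351/1250000000, 55103/2500000000, 1/1000000) (31817/125000, 274803/1000000, 140401/10000000000, 109307/5000000000, 1/1000000)"
  by (rule cstep_I[where qa="82244539/100000000" and qb="20787393/25000000" and qc="10132981/50000000" and qd="21589357/100000000" and qe="22040737/1000000000000" and qf="1/1000000"]) (simp_all add: power_divide)

lemma s7_67: "cstep 7 (31817/125000, 274803/1000000, 140401/10000000000, 109307/5000000000, 1/1000000) (63753/250000, 274427/1000000, 28309/2000000000, 216323/10000000000, 1/1000000)"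
  by (rule cstep_I[where qa="16453303/20000000" and qb="16626663/20000000" and qc="20289481/100000000" and qd="21556877/100000000" and qe="1366309/62500000000" and qf="1/1000000"]) (simp_all add: power_divide)

lemma s7_68: "cstep 7 (63753/250000, 274427/1000000, 28309/2000000000, 216323/10000000000, 1/1000000) (31919/125000, 34243/125000, 35757/2500000000, 107351/5000000000, 1/1000000)"
  by (rule cstep_I[where qa="82282183/100000000" and qb="41556211/50000000" and qc="5079929/25000000" and qd="2153373/10000000" and qe="10815927/500000000000" and qf="1/1000000"]) (simp_all add: power_divide)

lemma s7_69: "cstep 7 (31919/125000, 34243/125000, 35757/2500000000, 107351/5000000000, 1/1000000) (25579/100000, 273601/1000000, 28819/2000000000, 106317/5000000000, 1/1000000)"
  by (rule cstep_I[where qa="82302331/100000000" and qb="16619503/20000000" and qc="20341299/100000000" and qd="21503977/100000000" and qe="21469761/1000000000000" and qf="1/1000000"]) (simp_all add: power_divide)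

lemma s7_70: "cstep 7 (25579/100000, 273601/1000000, 28819/2000000000, 106317/5000000000, 1/1000000) (128051/500000, 273159/1000000, 145479/10000000000, 8447/400000000, 1/1000000)"
  by (rule cstep_I[where qa="16463331/20000000" and qb="20769583/25000000" and qc="4073817/20000000" and qd="21482833/100000000" and qe="2126297/100000000000" and qf="1/1000000"]) (simp_all add: power_divide)

lemma s7_71: "cstep 7 (128051/500000, 273159/1000000, 145479/10000000000, 8447/400000000, 1/1000000) (51301/200000, 54569/200000, 14647/1000000000, 104653/5000000000, 1/1000000)"
  by (rule cstep_I[where qa="20583783/25000000" and qb="2076617/2500000" and qc="10194433/50000000" and qd="21455571/100000000" and qe="5279269/250000000000" and qf="1/1000000"]) (simp_all add: power_divide)

lemma s7_72: "cstep 7 (51301/200000, 54569/200000, 14647/1000000000, 104653/5000000000, 1/1000000) (256791/1000000, 6811/25000, 147759/10000000000, 103993/5000000000, 1/1000000)"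
  by (rule cstep_I[where qa="82348271/100000000" and qb="10380883/12500000" and qc="10207201/50000000" and qd="669881/3125000" and qe="20930183/1000000000000" and qf="1/1000000"]) (simp_all add: power_divide)

lemma s7_73: "cstep 7 (256791/1000000, 6811/25000, 147759/10000000000, 103993/5000000000, 1/1000000) (128581/500000, 272153/1000000, 3717/250000000, 103147/5000000000, 1/1000000)"
  by (rule cstep_I[where qa="82365233/100000000" and qb="83034573/100000000" and qc="4086503/20000000" and qd="21411183/100000000" and qe="20798189/1000000000000" and qf="1/1000000"]) (simp_all add: power_divide)

lemma s7_74: "cstep 7 (128581/500000, 272153/1000000, 3717/250000000, 103147/5000000000, 1/1000000) (10297/40000, 135891/500000, 3747/250000000, 205101/10000000000, 1/1000000)"
  by (rule cstep_I[where qa="16475453/20000000" and qb="5188649/6250000" and qc="10227999/50000000" and qd="427869/2000000" and qe="5157249/250000000000" and qf="1/1000000"]) (simp_all add: power_divide)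

lemma sf7: "cstep 7 (10297/40000, 135891/500000, 3747/250000000, 205101/10000000000, 1/1000000) (10297/40000, 135891/500000, 3747/250000000, 205101/10000000000, 1/1000000)"
  by (rule cstep_I[where qa="8239283/10000000" and qb="83006917/100000000" and qc="10236319/50000000" and qd="21370517/100000000" and qe="205097/10000000000" and qf="1/1000000"]) (simp_all add: power_divide)

lemma cc7: "ccond 7 (10297/40000, 135891/500000, 3747/250000000, 205101/10000000000, 1/1000000) (1/1000) (999/1000)"
  by (rule ccond_I[where G="83006917/100000000" and Hb="21370517/100000000" and Hc="205097/10000000000" and A="205101/10000000000"]) (simp_all add: power_divide)

lemma ch7: "chain 7 [(0, 1, 0, 9/10, 9/10), (146319/2500000, 1, 0, 622299/1000000, 12/25), (146319/2500000, 108679/125000, 78991/50000000000000, 5661/50000, 17/1000), (690199/10000000, 143349/200000, 78991/50000000000000, 140937/20000000, 1/1000000), (217407/2500000, 647413/1000000, 7307/1562500000000, 9101/4000000, 1/1000000), (491291/5000000, 116843/200000, 52453/2500000000000, 73083/50000000, 1/1000000), (111091/1000000, 137353/250000, 114707/2500000000000, 116687/125000000, 1/1000000), (119491/1000000, 513547/1000000, 49943/500000000000, 707863/1000000000, 1/1000000), (4043/31250, 122987/250000, 78917/500000000000, 129853/250000000, 1/1000000), (4251/31250, 234121/500000, 64721/250000000000, 3319/7812500, 1/1000000), (144041/1000000, 226619/500000, 352983/1000000000000, 336193/1000000000, 1/1000000), (149533/1000000, 43613/100000, 125387/250000000000, 57499/200000000, 1/1000000), (1953/12500, 212479/500000, 315123/500000000000,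 119271/500000000, 1/1000000), (80449/500000, 205947/500000, 411321/500000000000, 1641/7812500, 1/1000000), (33329/200000, 201589/500000, 491211/500000000000, 180027/1000000000, 1/1000000), (170673/1000000, 78561/200000, 30333/25000000000, 80919/500000000, 1/1000000), (175681/1000000, 385777/1000000, 139993/100000000000, 17753/125000000, 1/1000000), (89607/500000, 188651/500000, 4159/2500000000, 64831/500000000, 1/1000000), (183633/1000000, 74299/200000, 93633/50000000000, 115853/1000000000, 1/1000000), (37353/200000, 364421/1000000, 216341/100000000000, 53523/500000000, 1/1000000), (190701/1000000, 89883/250000, 239067/100000000000, 242529/2500000000, 1/1000000), (193501/1000000, 35353/100000, 270307/100000000000, 905011/10000000000, 1/1000000), (197031/1000000, 174677/500000, 147231/50000000000, 829683/10000000000, 1/1000000), (3991/20000, 86049/250000, 327349/100000000000, 24379/312500000, 1/1000000), (101367/500000, 170293/500000, 352567/100000000000, 72207/1000000000, 1/1000000), (51253/250000, 336107/1000000, 4833/1250000000, 341711/5000000000, 1/1000000), (207897/1000000, 166479/500000, 103149/25000000000, 637691/10000000000, 1/1000000), (52491/250000, 82259/250000, 447443/100000000000, 121391/2000000000, 1/1000000), (212587/1000000, 326269/1000000, 14807/3125000000, 570277/10000000000, 1/1000000), (214469/1000000, 322809/1000000, 509071/100000000000, 68179/1250000000, 1/1000000), (10843/50000, 160181/500000, 535623/100000000000, 515543/10000000000, 1/1000000), (218577/1000000, 158647/500000, 570933/100000000000, 495171/10000000000, 1/1000000), (110381/500000, 3939/12500, 149353/25000000000, 47051/1000000000, 1/1000000),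 (222331/1000000, 62477/200000, 63251/10000000000, 453611/10000000000, 1/1000000), (224331/1000000, 77611/250000, 658709/100000000000, 21651/500000000, 1/1000000), (28221/125000, 153999/500000, 21667/3125000000, 209423/5000000000, 1/1000000), (569/2500, 153129/500000, 71911/10000000000, 200749/5000000000, 1/1000000), (228917/1000000, 152031/500000, 188263/25000000000, 48687/1250000000, 1/1000000), (115299/500000, 302499/1000000, 194557/25000000000, 93687/2500000000, 1/1000000), (115903/500000, 150261/500000, 202831/25000000000, 182257/5000000000, 1/1000000), (233349/1000000, 149557/500000, 208947/25000000000, 351881/10000000000, 1/1000000), (117229/500000, 297329/1000000, 867881/100000000000, 343091/10000000000, 1/1000000), (58969/250000, 296057/1000000, 891543/100000000000, 166097/5000000000, 1/1000000), (118447/500000, 294443/1000000, 922537/100000000000, 20287/625000000, 1/1000000), (238197/1000000, 293293/1000000, 236327/25000000000, 315141/10000000000, 1/1000000), (239133/1000000, 291831/1000000, 975099/100000000000, 154269/5000000000, 1/1000000), (24033/100000, 72697/250000, 996953/100000000000, 300299/10000000000, 1/1000000), (24119/100000, 144731/500000, 51273/5000000000, 11781/400000000, 1/1000000), (242291/1000000, 72129/250000, 104633/10000000000, 28731/1000000000, 1/1000000), (243081/1000000, 287311/1000000, 21471/2000000000, 282247/10000000000, 1/1000000), (122047/500000, 286451/1000000, 54671/5000000000, 137949/5000000000, 1/1000000), (12241/50000, 57071/200000, 111931/10000000000, 54287/2000000000, 1/1000000), (30719/125000, 284573/1000000, 113817/10000000000, 265829/10000000000, 1/1000000), (246419/1000000,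 141787/500000, 58137/5000000000, 261883/10000000000, 1/1000000), (247277/1000000, 282863/1000000, 118059/10000000000, 25691/1000000000, 1/1000000), (24789/100000, 8811/31250, 24077/2000000000, 50683/2000000000, 1/1000000), (248679/1000000, 35163/125000, 122069/10000000000, 7781/312500000, 1/1000000), (249243/1000000, 140237/500000, 15533/1250000000, 122941/5000000000, 1/1000000), (15623/62500, 139941/500000, 31463/2500000000, 241943/10000000000, 1/1000000), (250487/1000000, 2233/8000, 127917/10000000000, 239163/10000000000, 1/1000000), (251153/1000000, 55717/200000, 129411/10000000000, 47129/2000000000, 1/1000000), (25163/100000, 138947/500000, 131349/10000000000, 5829/250000000, 1/1000000), (252243/1000000, 277401/1000000, 531/40000000, 23001/1000000000, 1/1000000), (252681/1000000, 276769/1000000, 134569/10000000000, 227783/10000000000, 1/1000000), (50649/200000, 1727/6250, 3397/250000000, 224953/10000000000, 1/1000000), (253647/1000000, 137871/500000, 137583/10000000000, 111479/5000000000, 1/1000000), (127083/500000, 275331/1000000, 17351/1250000000, 55103/2500000000, 1/1000000), (31817/125000, 274803/1000000, 140401/10000000000, 109307/5000000000, 1/1000000), (63753/250000, 274427/1000000, 28309/2000000000, 216323/10000000000, 1/1000000), (31919/125000, 34243/125000, 35757/2500000000, 107351/5000000000, 1/1000000), (25579/100000, 273601/1000000, 28819/2000000000, 106317/5000000000, 1/1000000), (128051/500000, 273159/1000000, 145479/10000000000, 8447/400000000, 1/1000000), (51301/200000, 54569/200000, 14647/1000000000, 104653/5000000000, 1/1000000), (256791/1000000, 6811/25000, 147759/10000000000,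 103993/5000000000, 1/1000000), (128581/500000, 272153/1000000, 3717/250000000, 103147/5000000000, 1/1000000), (10297/40000, 135891/500000, 3747/250000000, 205101/10000000000, 1/1000000)]"
  apply (rule chain_consI[OF s7_0])
  apply (rule chain_consI[OF s7_1])
  apply (rule chain_consI[OF s7_2])
  apply (rule chain_consI[OF s7_3])
  apply (rule chain_consI[OF s7_4])
  apply (rule chain_consI[OF s7_5])
  apply (rule chain_consI[OF s7_6])
  apply (rule chain_consI[OF s7_7])
  apply (rule chain_consI[OF s7_8])
  apply (rule chain_consI[OF s7_9])
  apply (rule chain_consI[OF s7_10])
  apply (rule chain_consI[OF s7_11])
  apply (rule chain_consI[OF s7_12])
  apply (rule chain_consI[OF s7_13])
  apply (rule chain_consI[OF s7_14])
  apply (rule chain_consI[OF s7_15])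
  apply (rule chain_consI[OF s7_16])
  apply (rule chain_consI[OF s7_17])
  apply (rule chain_consI[OF s7_18])
  apply (rule chain_consI[OF s7_19])
  apply (rule chain_consI[OF s7_20])
  apply (rule chain_consI[OF s7_21])
  apply (rule chain_consI[OF s7_22])
  apply (rule chain_consI[OF s7_23])
  apply (rule chain_consI[OF s7_24])
  apply (rule chain_consI[OF s7_25])
  apply (rule chain_consI[OF s7_26])
  apply (rule chain_consI[OF s7_27])
  apply (rule chain_consI[OF s7_28])
  apply (rule chain_consI[OF s7_29])
  apply (rule chain_consI[OF s7_30])
  apply (rule chain_consI[OF s7_31])
  apply (rule chain_consI[OF s7_32])
  apply (rule chain_consI[OF s7_33])
  apply (rule chain_consI[OF s7_34])
  apply (rule chain_consI[OF s7_35])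
  apply (rule chain_consI[OF s7_36])
  apply (rule chain_consI[OF s7_37])
  apply (rule chain_consI[OF s7_38])
  apply (rule chain_consI[OF s7_39])
  apply (rule chain_consI[OF s7_40])
  apply (rule chain_consI[OF s7_41])
  apply (rule chain_consI[OF s7_42])
  apply (rule chain_consI[OF s7_43])
  apply (rule chain_consI[OF s7_44])
  apply (rule chain_consI[OF s7_45])
  apply (rule chain_consI[OF s7_46])
  apply (rule chain_consI[OF s7_47])
  apply (rule chain_consI[OF s7_48])
  apply (rule chain_consI[OF s7_49])
  apply (rule chain_consI[OF s7_50])
  apply (rule chain_consI[OF s7_51])
  apply (rule chain_consI[OF s7_52])
  apply (rule chain_consI[OF s7_53])
  apply (rule chain_consI[OF s7_54])
  apply (rule chain_consI[OF s7_55])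
  apply (rule chain_consI[OF s7_56])
  apply (rule chain_consI[OF s7_57])
  apply (rule chain_consI[OF s7_58])
  apply (rule chain_consI[OF s7_59])
  apply (rule chain_consI[OF s7_60])
  apply (rule chain_consI[OF s7_61])
  apply (rule chain_consI[OF s7_62])
  apply (rule chain_consI[OF s7_63])
  apply (rule chain_consI[OF s7_64])
  apply (rule chain_consI[OF s7_65])
  apply (rule chain_consI[OF s7_66])
  apply (rule chain_consI[OF s7_67])
  apply (rule chain_consI[OF s7_68])
  apply (rule chain_consI[OF s7_69])
  apply (rule chain_consI[OF s7_70])
  apply (rule chain_consI[OF s7_71])
  apply (rule chain_consI[OF s7_72])
  apply (rule chain_consI[OF s7_73])
  apply (rule chain_consI[OF s7_74])
  by (rule chain_single)

lemma num7: "\<exists>Bf \<rho> \<theta> J. (\<forall>x. cbx (0, 1, 0, 9/10, 9/10) x \<longrightarrow> cbx Bf ((psi 7 ^^ J) x)) \<and> cstep 7 Bf Bf \<and> ccond 7 Bf \<rho> \<theta>"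
proof -
  have L: "last [(0, 1, 0, 9/10, 9/10), (146319/2500000, 1, 0, 622299/1000000, 12/25), (146319/2500000, 108679/125000, 78991/50000000000000, 5661/50000, 17/1000), (690199/10000000, 143349/200000, 78991/50000000000000, 140937/20000000, 1/1000000), (217407/2500000, 647413/1000000, 7307/1562500000000, 9101/4000000, 1/1000000), (491291/5000000, 116843/200000, 52453/2500000000000, 73083/50000000, 1/1000000), (111091/1000000, 137353/250000, 114707/2500000000000, 116687/125000000, 1/1000000), (119491/1000000, 513547/1000000, 49943/500000000000, 707863/1000000000, 1/1000000), (4043/31250, 122987/250000, 78917/500000000000, 129853/250000000, 1/1000000), (4251/31250, 234121/500000, 64721/250000000000, 3319/7812500, 1/1000000), (144041/1000000, 226619/500000, 352983/1000000000000, 336193/1000000000, 1/1000000), (149533/1000000, 43613/100000, 125387/250000000000, 57499/200000000, 1/1000000), (1953/12500, 212479/500000, 315123/500000000000, 119271/500000000, 1/1000000), (80449/500000, 205947/500000, 411321/500000000000, 1641/7812500, 1/1000000), (33329/200000, 201589/500000, 491211/500000000000, 180027/1000000000, 1/1000000), (170673/1000000, 78561/200000, 30333/25000000000, 80919/500000000, 1/1000000), (175681/1000000, 385777/1000000, 139993/100000000000, 17753/125000000, 1/1000000), (89607/500000, 188651/500000, 4159/2500000000, 64831/500000000, 1/1000000), (183633/1000000, 74299/200000, 93633/50000000000, 115853/1000000000, 1/1000000), (37353/200000, 364421/1000000, 216341/100000000000, 53523/500000000, 1/1000000), (190701/1000000, 89883/250000, 239067/100000000000, 242529/2500000000, 1/1000000),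 (193501/1000000, 35353/100000, 270307/100000000000, 905011/10000000000, 1/1000000), (197031/1000000, 174677/500000, 147231/50000000000, 829683/10000000000, 1/1000000), (3991/20000, 86049/250000, 327349/100000000000, 24379/312500000, 1/1000000), (101367/500000, 170293/500000, 352567/100000000000, 72207/1000000000, 1/1000000), (51253/250000, 336107/1000000, 4833/1250000000, 341711/5000000000, 1/1000000), (207897/1000000, 166479/500000, 103149/25000000000, 637691/10000000000, 1/1000000), (52491/250000, 82259/250000, 447443/100000000000, 121391/2000000000, 1/1000000), (212587/1000000, 326269/1000000, 14807/3125000000, 570277/10000000000, 1/1000000), (214469/1000000, 322809/1000000, 509071/100000000000, 68179/1250000000, 1/1000000), (10843/50000, 160181/500000, 535623/100000000000, 515543/10000000000, 1/1000000), (218577/1000000, 158647/500000, 570933/100000000000, 495171/10000000000, 1/1000000), (110381/500000, 3939/12500, 149353/25000000000, 47051/1000000000, 1/1000000), (222331/1000000, 62477/200000, 63251/10000000000, 453611/10000000000, 1/1000000), (224331/1000000, 77611/250000, 658709/100000000000, 21651/500000000, 1/1000000), (28221/125000, 153999/500000, 21667/3125000000, 209423/5000000000, 1/1000000), (569/2500, 153129/500000, 71911/10000000000, 200749/5000000000, 1/1000000), (228917/1000000, 152031/500000, 188263/25000000000, 48687/1250000000, 1/1000000), (115299/500000, 302499/1000000, 194557/25000000000, 93687/2500000000, 1/1000000), (115903/500000, 150261/500000, 202831/25000000000, 182257/5000000000, 1/1000000), (233349/1000000, 149557/500000, 208947/25000000000, 351881/10000000000, 1/1000000), (117229/500000, 297329/1000000,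 867881/100000000000, 343091/10000000000, 1/1000000), (58969/250000, 296057/1000000, 891543/100000000000, 166097/5000000000, 1/1000000), (118447/500000, 294443/1000000, 922537/100000000000, 20287/625000000, 1/1000000), (238197/1000000, 293293/1000000, 236327/25000000000, 315141/10000000000, 1/1000000), (239133/1000000, 291831/1000000, 975099/100000000000, 154269/5000000000, 1/1000000), (24033/100000, 72697/250000, 996953/100000000000, 300299/10000000000, 1/1000000), (24119/100000, 144731/500000, 51273/5000000000, 11781/400000000, 1/1000000), (242291/1000000, 72129/250000, 104633/10000000000, 28731/1000000000, 1/1000000), (243081/1000000, 287311/1000000, 21471/2000000000, 282247/10000000000, 1/1000000), (122047/500000, 286451/1000000, 54671/5000000000, 137949/5000000000, 1/1000000), (12241/50000, 57071/200000, 111931/10000000000, 54287/2000000000, 1/1000000), (30719/125000, 284573/1000000, 113817/10000000000, 265829/10000000000, 1/1000000), (246419/1000000, 141787/500000, 58137/5000000000, 261883/10000000000, 1/1000000), (247277/1000000, 282863/1000000, 118059/10000000000, 25691/1000000000, 1/1000000), (24789/100000, 8811/31250, 24077/2000000000, 50683/2000000000, 1/1000000), (248679/1000000, 35163/125000, 122069/10000000000, 7781/312500000, 1/1000000), (249243/1000000, 140237/500000, 15533/1250000000, 122941/5000000000, 1/1000000), (15623/62500, 139941/500000, 31463/2500000000, 241943/10000000000, 1/1000000), (250487/1000000, 2233/8000, 127917/10000000000, 239163/10000000000, 1/1000000), (251153/1000000, 55717/200000, 129411/10000000000, 47129/2000000000, 1/1000000), (25163/100000, 138947/500000, 131349/10000000000,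 5829/250000000, 1/1000000), (252243/1000000, 277401/1000000, 531/40000000, 23001/1000000000, 1/1000000), (252681/1000000, 276769/1000000, 134569/10000000000, 227783/10000000000, 1/1000000), (50649/200000, 1727/6250, 3397/250000000, 224953/10000000000, 1/1000000), (253647/1000000, 137871/500000, 137583/10000000000, 111479/5000000000, 1/1000000), (127083/500000, 275331/1000000, 17351/1250000000, 55103/2500000000, 1/1000000), (31817/125000, 274803/1000000, 140401/10000000000, 109307/5000000000, 1/1000000), (63753/250000, 274427/1000000, 28309/2000000000, 216323/10000000000, 1/1000000), (31919/125000, 34243/125000, 35757/2500000000, 107351/5000000000, 1/1000000), (25579/100000, 273601/1000000, 28819/2000000000, 106317/5000000000, 1/1000000), (128051/500000, 273159/1000000, 145479/10000000000, 8447/400000000, 1/1000000), (51301/200000, 54569/200000, 14647/1000000000, 104653/5000000000, 1/1000000), (256791/1000000, 6811/25000, 147759/10000000000, 103993/5000000000, 1/1000000), (128581/500000, 272153/1000000, 3717/250000000, 103147/5000000000, 1/1000000), (10297/40000, 135891/500000, 3747/250000000, 205101/10000000000, 1/1000000)] = (10297/40000, 135891/500000, 3747/250000000, 205101/10000000000, 1/1000000)" by simp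
  show ?thesis
    using chain_cbx[OF ch7] sf7 cc7 unfolding L by blast
qed



lemma num_all:
  assumes "2 \<le> d" "d \<le> 7"
  shows "\<exists>Bf \<rho> \<theta> J. (\<forall>x. cbx (0, 1, 0, 9/10, 9/10) x \<longrightarrow> cbx Bf ((psi d ^^ J) x)) \<and> cstep d Bf Bf \<and> ccond d Bf \<rho> \<theta>"
proof -
  consider "d = 2" | "d = 3" | "d = 4" | "d = 5" | "d = 6" | "d = 7" using assms by linarith
  thus ?thesis
  proof cases
    case 1 show ?thesis unfolding 1 by (rule num2)
  next
    case 2 show ?thesis unfolding 2 by (rule num3)
  next
    case 3 show ?thesis unfolding 3 by (rule num4)
  next
    case 4 show ?thesis unfolding 4 by (rule num5)
  next
    case 5 show ?thesis unfolding 5 by (rule num6)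
  next
    case 6 show ?thesis unfolding 6 by (rule num7)
  qed
qed

lemma Rmap_props:
  assumes g: "good w"
  shows "Rmap w 0 = 0" "\<forall>n\<ge>1. 0 \<le> Rmap w n \<and> Rmap w n \<le> 1" "zc (Rmap w)"
    "\<exists>N t. 2 \<le> N \<and> 0 \<le> t \<and> t < 1 \<and> (\<forall>n\<ge>N. Rmap w n \<le> t)"
proof -
  obtain k c where kc: "k \<ge> 0" "0 \<le> c" "c < 1" "\<forall>i. 0 \<le> i \<and> i < k \<longrightarrow> w i = w (i+1)"
      "\<forall>i. i \<ge> k \<longrightarrow> w (i+1) \<le> c * w i" and wnn: "\<forall>i. w i \<ge> 0"
    using g unfolding good_def by blast
  have ws: "w (i+1) \<le> w i" if "0 \<le> i" for i
  proof (cases "i < k")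
    case True thus ?thesis using kc(4) that by simp
  next
    case False
    hence "w (i+1) \<le> c * w i" using kc(5) by simp
    also have "\<dots> \<le> w i" using kc wnn mult_right_mono[of c 1 "w i"] by simp
    finally show ?thesis .
  qed
  show "Rmap w 0 = 0" by (simp add: Rmap_def)
  have R: "Rmap w n = (if w (int n - 1) \<noteq> 0 then w (int n - 1 + 1) / w (int n - 1) else 0)" if "n \<ge> 1" for n
    using that by (simp add: Rmap_def)
  show "\<forall>n\<ge>1. 0 \<le> Rmap w n \<and> Rmap w n \<le> 1"
  proof (intro allI impI)
    fix n :: nat assume n: "1 \<le> n"
    define i where "i = int n - 1"
    have i0: "0 \<le> i" using n by (simp add: i_def)
    show "0 \<le> Rmap w n \<and> Rmap w n \<le> 1"
    proof (cases "w i = 0")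
      case True thus ?thesis using R[OF n] by (simp add: i_def)
    next
      case False
      hence wp: "0 < w i" using wnn by (metis less_eq_real_def)
      have eq: "Rmap w n = w (i+1) / w i" using R[OF n] False by (simp add: i_def)
      have "w (i+1) \<le> w i" "0 \<le> w (i+1)" using ws[OF i0] wnn by auto
      thus ?thesis using eq wp by (simp add: divide_le_eq_1)
    qed
  qed
  show "zc (Rmap w)" unfolding zc_def
  proof (intro allI impI)
    fix n :: nat assume n: "1 \<le> n" and r0: "Rmap w n = 0"
    define i where "i = int n - 1"
    have i0: "0 \<le> i" using n by (simp add: i_def)
    have "w (i+1) = 0"
    proof (cases "w i = 0")
      case True thus ?thesis using ws[OF i0] wnn by (metis order_antisym)
    next
      case False thus ?thesis using R[OF n] r0 by (simp add: i_def)
    qed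
    hence "w (int (Suc n) - 1) = 0" by (simp add: i_def)
    thus "Rmap w (Suc n) = 0" by (simp add: Rmap_def)
  qed
  show "\<exists>N t. 2 \<le> N \<and> 0 \<le> t \<and> t < 1 \<and> (\<forall>n\<ge>N. Rmap w n \<le> t)"
  proof (intro exI conjI allI impI)
    show "2 \<le> nat k + 2" by simp
    show "0 \<le> c" "c < 1" using kc by auto
    fix n assume n: "nat k + 2 \<le> n"
    define i where "i = int n - 1"
    have ik: "k \<le> i" using n kc(1) by (simp add: i_def)
    show "Rmap w n \<le> c"
    proof (cases "w i = 0")
      case True thus ?thesis using R[of n] n kc by (simp add: i_def)
    next
      case False
      hence "0 < w i" using wnn by (metis less_eq_real_def)
      moreover have "w (i+1) \<le> c * w i" using kc(5) ik by simp
      moreover have "Rmap w n = w (i+1) / w i" using R[of n] n False by (simp add: i_def)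
      ultimately show ?thesis by (simp add: pos_divide_le_eq)
    qed
  qed
qed

theorem proposition2p7:
  fixes d :: nat and w :: "int \<Rightarrow> real"
  assumes "2 \<le> d" and "d \<le> 7"
    and "good w" and "(w has_sum 1) UNIV"
  shows "(\<exists>c. 0 < c \<and> c < 1 \<and>
           (\<forall>\<^sub>F k in sequentially. ((psi d) ^^ k) (Rmap w) \<in> Sset 0 1 c)) \<and>
         (\<forall>n\<ge>1. convergent (\<lambda>k. ((psi d) ^^ k) (Rmap w) n))"
proof -
  have d2: "2 \<le> d" and d1: "1 \<le> d" using assms by auto
  define X where "X j = (psi d ^^ j) (Rmap w)" for j
  note RP = Rmap_props[OF assms(3)]
  have XS: "X (Suc j) = psi d (X j)" for j by (simp add: X_def)
  have Xadd: "X (K + j) = (psi d ^^ j) (X K)" for K j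
    unfolding X_def by (metis add.commute comp_apply funpow_add)
  have XU: "\<forall>n\<ge>1. 0 \<le> X j n \<and> X j n \<le> 1" for j
  proof (induction j)
    case 0 thus ?case using RP by (simp add: X_def)
  next
    case (Suc j) thus ?case using psi_unit[OF Suc.IH] XS by simp
  qed
  have Xz: "zc (X j)" for j
  proof (induction j)
    case 0 thus ?case using RP by (simp add: X_def)
  next
    case (Suc j) thus ?case using zc_psi[OF d1 XU Suc.IH] XS by simp
  qed
  have X0: "X j 0 = 0" for j by (cases j) (simp_all add: X_def RP psi_0)
  obtain N t where Nt: "2 \<le> N" "0 \<le> t" "t < 1" "\<forall>n\<ge>N. Rmap w n \<le> t" using RP by blast
  have "Tb N t (Rmap w)" unfolding Tb_def using RP Nt by auto
  then obtain K where K: "Tb 2 (9/10) (X K)" using phaseA[OF d2 _ Nt(1,2,3)] unfolding X_def by blast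
  have TK: "Tb 2 (9/10) (X (K + j))" for j using Tb2_inv[OF d2 K] Xadd by simp
  have part1: "\<exists>c. 0 < c \<and> c < 1 \<and> (\<forall>\<^sub>F k in sequentially. ((psi d) ^^ k) (Rmap w) \<in> Sset 0 1 c)"
  proof (intro exI conjI)
    show "(0::real) < 9/10" "(9/10::real) < 1" by auto
    show "\<forall>\<^sub>F k in sequentially. ((psi d) ^^ k) (Rmap w) \<in> Sset 0 1 (9/10)"
    proof (rule eventually_sequentiallyI[of K])
      fix k assume k: "K \<le> k"
      have T: "Tb 2 (9/10) (X k)" using TK[of "k - K"] k by simp
      have "X k \<in> Rset" using in_Rset[OF X0 XU] T Xz unfolding Tb_def by blast
      thus "((psi d) ^^ k) (Rmap w) \<in> Sset 0 1 (9/10)" using T unfolding Sset_def Tb_def X_def by auto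
    qed
  qed
  obtain Bf \<rho> \<theta> J where num: "\<forall>x. cbx (0, 1, 0, 9/10, 9/10) x \<longrightarrow> cbx Bf ((psi d ^^ J) x)"
      "cstep d Bf Bf" "ccond d Bf \<rho> \<theta>"
    using num_all[OF assms(1,2)] by blast
  obtain l1 u1 l2 u2 e where Bf: "Bf = (l1,u1,l2,u2,e)" using prod_cases5 by blast
  have rt: "0 < \<rho>" "0 \<le> \<theta>" "\<theta> < 1" using num(3) unfolding ccond_def Bf by auto
  have "cbx (0, 1, 0, 9/10, 9/10) (X K)" using K unfolding cbx_def Tb_def by auto
  hence "cbx Bf (X (K + J))" using num(1) Xadd by simp
  hence CB: "cbx Bf (X (K + J + j))" for j using cstep_inv[OF num(2)] Xadd[of "K+J" j] by simp
  define M0 where "M0 = max 1 (1/\<rho>)"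
  have M0: "0 \<le> M0" "1 \<le> M0" "1 \<le> \<rho> * M0"
  proof -
    show "0 \<le> M0" "1 \<le> M0" by (auto simp: M0_def)
    have "1 = \<rho> * (1/\<rho>)" using rt by simp
    also have "\<dots> \<le> \<rho> * M0" using rt by (intro mult_left_mono) (auto simp: M0_def)
    finally show "1 \<le> \<rho> * M0" .
  qed
  have CD: "cdist \<rho> (\<theta>^j * M0) (X (K + J + j)) (X (K + J + Suc j))" for j
  proof (induction j)
    case 0
    have "\<bar>X (K+J) n - X (K + J + 1) n\<bar> \<le> 1" if "n \<ge> 1" for n
      using XU[of "K+J"] XU[of "K+J+1"] that by (simp add: abs_le_iff) (meson diff_le_eq order_trans le_add_same_cancel1)
    hence b: "\<bar>X (K+J) n - X (K + J + 1) n\<bar> \<le> 1" if "n \<ge> 1" for n using that by blast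
    show ?case unfolding cdist_def
    proof (intro conjI allI impI)
      show "\<bar>X (K + J + 0) 1 - X (K + J + Suc 0) 1\<bar> \<le> \<theta> ^ 0 * M0" using b[of 1] M0 by simp
      fix n :: nat assume "2 \<le> n"
      thus "\<bar>X (K + J + 0) n - X (K + J + Suc 0) n\<bar> \<le> \<rho> * (\<theta> ^ 0 * M0)" using b[of n] M0 by simp
    qed
  next
    case (Suc j)
    have "cdist \<rho> (\<theta> * (\<theta>^j * M0)) (psi d (X (K + J + j))) (psi d (X (K + J + Suc j)))"
      using contract[OF d1 num(2) num(3) CB CB[of "Suc j"] Suc.IH] rt M0 by simp
    thus ?case using XS by (simp add: mult.assoc)
  qed
  have part2: "\<forall>n\<ge>1. convergent (\<lambda>k. ((psi d) ^^ k) (Rmap w) n)"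
  proof (intro allI impI)
    fix n :: nat assume n: "1 \<le> n"
    have "convergent (\<lambda>k. X k n)"
    proof (rule conv_geom[OF rt(2,3), of _ "K + J" "max 1 \<rho> * M0"])
      fix j
      have c: "\<bar>X (K + J + Suc j) n - X (K + J + j) n\<bar> \<le> max 1 \<rho> * (\<theta>^j * M0)"
      proof (cases "n = 1")
        case True
        have "\<bar>X (K + J + Suc j) n - X (K + J + j) n\<bar> \<le> \<theta>^j * M0"
          using CD[of j] True unfolding cdist_def by (simp add: abs_minus_commute)
        also have "\<dots> \<le> max 1 \<rho> * (\<theta>^j * M0)"
          using mult_right_mono[of 1 "max 1 \<rho>" "\<theta>^j * M0"] rt M0 by simp
        finally show ?thesis .
      next
        case False
        have "\<bar>X (K + J + Suc j) n - X (K + J + j) n\<bar> \<le> \<rho> * (\<theta>^j * M0)"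
          using CD[of j] False n unfolding cdist_def by (simp add: abs_minus_commute)
        also have "\<dots> \<le> max 1 \<rho> * (\<theta>^j * M0)" using rt M0 by (intro mult_right_mono) auto
        finally show ?thesis .
      qed
      thus "\<bar>X (Suc (K + J + j)) n - X (K + J + j) n\<bar> \<le> max 1 \<rho> * M0 * \<theta> ^ j"
        by (simp add: mult_ac)
    qed
    thus "convergent (\<lambda>k. ((psi d) ^^ k) (Rmap w) n)" by (simp add: X_def)
  qed
  show ?thesis using part1 part2 by blast
qed


end
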